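(* Let $r,d,d_1,d_2\in\mathbb{N}$, $s_i,t_i\in\mathbb{N}$ for $i\in[r]$. Let $\mathcal{A}=\{\mathbf{a}^1,\dots,\mathbf{a}^r\}\subseteq\mathbb{Z}^d$ be linearly independent such that some $\overline{\omega}\in\mathbb{Q}^d$ satisfies $\overline{\omega}\cdot\mathbf{a}^i=1$ for all $i$. Let $\mathcal{B}=\{\mathbf{b}^i_j: i\in[r], j\in[s_i]\}\subseteq\mathbb{Z}^{d_1}$ and $\mathcal{C}=\{\mathbf{c}^i_k: i\in[r],k\in[t_i]\}\subseteq\mathbb{Z}^{d_2}$ be point configurations for which there exist linear maps $\pi_1:\mathbb{Z}^{d_1}\to\mathbb{Z}^d$, $\pi_2:\mathbb{Z}^{d_2}\to\mathbb{Z}^d$ with $\pi_1(\mathbf{b}^i_j)=\mathbf{a}^i$ and $\pi_2(\mathbf{c}^i_k)=\mathbf{a}^i$ for all $i,j,k$. Let $P=\operatorname{conv}(\mathcal{B})$, $Q=\operatorname{conv}(\mathcal{C})$, and let $w=(w^i_j)$, $\tilde w=(\tilde w^i_k)$ be positive weight vectors on $\mathcal{B}$, $\mathcal{C}$. Suppose $(\mathcal{B},w)$ and $(\mathcal{C},\tilde w)$ have rational linear precision, with blending functions $\{\beta^i_j\}$ (rational functions of $\mathbf{p}\in\mathbb{C}^{d_1}$) and $\{\tilde\beta^i_k\}$ (rational functions of $\mathbf{q}\in\mathbb{C}^{d_2}$) satisfying the definition of rational linear precision. Then the toric fiber product $\mathcal{B}\times_{\mathcal{A}}\mathcal{C}$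 with weights $w_{\mathcal{B}\times_{\mathcal{A}}\mathcal{C}}=(w^i_j\tilde w^i_k)$ has rational linear precision (i.e. the polytope $P\times_{\mathcal{A}}Q$ has rational linear precision). Moreover, blending functions with rational linear precision for $P\times_{\mathcal{A}}Q$ are given by \[\beta^i_{j,k}(\mathbf{p},\mathbf{q})=\frac{\beta^i_j(\mathbf{p})\,\tilde\beta^i_k(\mathbf{q})}{\sum_{j'\in[s_i]}\beta^i_{j'}(\mathbf{p})}=\frac{\beta^i_j(\mathbf{p})\,\tilde\beta^i_k(\mathbf{q})}{\sum_{k'\in[t_i]}\tilde\beta^i_{k'}(\mathbf{q})},\qquad (\mathbf{p},\mathbf{q})\in P\times_{\mathcal{A}}Q,\] for $i\in[r]$, $j\in[s_i]$, $k\in[t_i]$.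
   Context: Toric fiber product: $\mathcal{B}\times_{\mathcal{A}}\mathcal{C}=\{\mathbf{m}^i_{j,k}:=(\mathbf{b}^i_j,\mathbf{c}^i_k): i\in[r], j\in[s_i],k\in[t_i]\}\subseteq\mathbb{Z}^{d_1+d_2}$, and $P\times_{\mathcal{A}}Q:=\operatorname{conv}(\mathcal{B}\times_{\mathcal{A}}\mathcal{C})$. Scaled projective toric variety: for a finite point configuration $\mathcal{S}\subseteq\mathbb{Z}^n$ with positive weights $w=(w_{\mathbf{s}})$, $X_{\mathcal{S},w}$ is the Zariski closure of the image of $(\mathbb{C}^* )^n\to\mathbb{P}^{|\mathcal{S}|-1}$, $\mathbf{t}\mapsto[w_{\mathbf{s}}\mathbf{t}^{\mathbf{s}}]_{\mathbf{s}\in\mathcal{S}}$ (if the all-ones vector is not in the row span of the matrix with columns $\mathbf{s}$, a row of ones is appended). Rational linear precision: $(\mathcal{S},w)$, with polytope $\Pi=\operatorname{conv}(\mathcal{S})$, has rational linear precision if there are rational functions $\{\hat\beta_{\mathbf{s}}\}_{\mathbf{s}\in\mathcal{S}}$ on $\mathbb{C}^n$ (called blending functions) such that (1) $\sum_{\mathbf{s}}\hat\beta_{\mathbf{s}}=1$; (2) $\hat\beta=(\hat\beta_{\mathbf{s}})_{\mathbf{s}}:\mathbb{C}^n\dashrightarrow X_{\mathcal{S},w}\subseteq\mathbb{P}^{|\mathcal{S}|-1}$ is a rational parametrization of $X_{\mathcal{S},w}$; (3) for every $\mathbf{p}$ in the relative interior of $\Pi$, each $\hat\beta_{\mathbf{s}}(\mathbf{p})$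 is defined and a nonnegative real number; (4) $\sum_{\mathbf{s}}\hat\beta_{\mathbf{s}}(\mathbf{p})\,\mathbf{s}=\mathbf{p}$ for all $\mathbf{p}\in\Pi$. *)

theory Defs
  imports "HOL-Analysis.Analysis"
begin

definition rvec :: "int^'n \<Rightarrow> real^'n" where
  "rvec s = (\<chi> l. real_of_int (s $ l))"

definition cvec :: "real^'n \<Rightarrow> complex^'n" where
  "cvec p = (\<chi> l. complex_of_real (p $ l))"

text \<open>Concatenation Z^{d1} x Z^{d2} = Z^{d1+d2}, coordinates indexed by the sum type.\<close>
definition vjoin :: "'a^'n1::finite \<Rightarrow> 'a^'n2::finite \<Rightarrow> 'a^('n1 + 'n2)" where
  "vjoin b c = (\<chi> l. case_sum (\<lambda>x. b $ x) (\<lambda>y. c $ y) l)"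

definition vleft :: "'a^('n1::finite + 'n2::finite) \<Rightarrow> 'a^'n1" where
  "vleft m = (\<chi> l. m $ Inl l)"

definition vright :: "'a^('n1::finite + 'n2::finite) \<Rightarrow> 'a^'n2" where
  "vright m = (\<chi> l. m $ Inr l)"

definition cpoly :: "(complex^'n \<Rightarrow> complex) \<Rightarrow> bool" where
  "cpoly f \<longleftrightarrow> (\<exists>E c. finite (E :: ('n \<Rightarrow> nat) set) \<and>
      f = (\<lambda>x. \<Sum>e\<in>E. c e * (\<Prod>l\<in>UNIV. (x $ l) ^ e l)))"

text \<open>A rational function on C^n, represented by a numerator/denominator pair.\<close>
type_synonym 'n ratfun = "(complex^'n \<Rightarrow> complex) \<times> (complex^'n \<Rightarrow> complex)"

definition is_ratfun :: "'n::finite ratfun \<Rightarrow> bool" where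
  "is_ratfun R \<longleftrightarrow> cpoly (fst R) \<and> cpoly (snd R) \<and> snd R \<noteq> (\<lambda>_. 0)"

definition rf_defined :: "'n::finite ratfun \<Rightarrow> complex^'n \<Rightarrow> bool" where
  "rf_defined R x \<longleftrightarrow> snd R x \<noteq> 0"

definition rf_eval :: "'n::finite ratfun \<Rightarrow> complex^'n \<Rightarrow> complex" where
  "rf_eval R x = fst R x / snd R x"

text \<open>Homogeneous polynomial functions in variables indexed by a finite set I.
  Points of C^I are functions 'v => complex vanishing outside I.\<close>
definition hpoly :: "'v set \<Rightarrow> (('v \<Rightarrow> complex) \<Rightarrow> complex) \<Rightarrow> bool" where
  "hpoly I F \<longleftrightarrow> (\<exists>E c (\<delta>::nat). finite (E :: ('v \<Rightarrow> nat) set) \<and>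
      (\<forall>e\<in>E. (\<forall>v. v \<notin> I \<longrightarrow> e v = 0) \<and> (\<Sum>v\<in>I. e v) = \<delta>) \<and>
      F = (\<lambda>y. \<Sum>e\<in>E. c e * (\<Prod>v\<in>I. (y v) ^ e v)))"

text \<open>Nonzero representatives of points of the projective space P(C^I).\<close>
definition proj_pts :: "'v set \<Rightarrow> ('v \<Rightarrow> complex) set" where
  "proj_pts I = {y. (\<forall>v. v \<notin> I \<longrightarrow> y v = 0) \<and> (\<exists>v\<in>I. y v \<noteq> 0)}"

definition proj_closure :: "'v set \<Rightarrow> ('v \<Rightarrow> complex) set \<Rightarrow> ('v \<Rightarrow> complex) set" where
  "proj_closure I Y = {y \<in> proj_pts I. \<forall>F. hpoly I F \<and> (\<forall>z\<in>Y. F z = 0) \<longrightarrow> F y = 0}"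

definition toric_var :: "(int^'n) set \<Rightarrow> (int^'n \<Rightarrow> real) \<Rightarrow> ((int^'n) \<Rightarrow> complex) set" where
  "toric_var S w = proj_closure S
     {(\<lambda>s. if s \<in> S then complex_of_real (w s) * (\<Prod>l\<in>UNIV. (t $ l) powi (s $ l)) else 0)
       | t :: complex^'n. \<forall>l. t $ l \<noteq> 0}"

definition blending_functions ::
  "(int^'n::finite) set \<Rightarrow> (int^'n \<Rightarrow> real) \<Rightarrow> (int^'n \<Rightarrow> 'n ratfun) \<Rightarrow> bool" where
  "blending_functions S w \<beta> \<longleftrightarrow>
     (\<forall>s\<in>S. is_ratfun (\<beta> s)) \<and>
     \<comment> \<open>(1) the blending functions sum to one\<close>
     (\<forall>x. (\<forall>s\<in>S. rf_defined (\<beta> s) x) \<longrightarrow> (\<Sum>s\<in>S. rf_eval (\<beta> s) x) = 1) \<and>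
     \<comment> \<open>(2) rational parametrization of X_{S,w}: image lies in X and is Zariski dense in X\<close>
     (let Y = {(\<lambda>s. if s \<in> S then rf_eval (\<beta> s) x else 0) | x. \<forall>s\<in>S. rf_defined (\<beta> s) x}
      in Y \<subseteq> toric_var S w \<and> proj_closure S Y = toric_var S w) \<and>
     \<comment> \<open>(3) defined and nonnegative real on the relative interior of the polytope\<close>
     (\<forall>p\<in>rel_interior (convex hull (rvec ` S)). \<forall>s\<in>S.
        rf_defined (\<beta> s) (cvec p) \<and> (\<exists>u::real. u \<ge> 0 \<and> rf_eval (\<beta> s) (cvec p) = complex_of_real u)) \<and>
     \<comment> \<open>(4) linear precision\<close>
     (\<forall>p\<in>convex hull (rvec ` S). (\<forall>s\<in>S. rf_defined (\<beta> s) (cvec p)) \<longrightarrow>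
        (\<forall>l. (\<Sum>s\<in>S. rf_eval (\<beta> s) (cvec p) * of_int (s $ l)) = cvec p $ l))"

definition rational_linear_precision :: "(int^'n) set \<Rightarrow> (int^'n \<Rightarrow> real) \<Rightarrow> bool" where
  "rational_linear_precision S w \<longleftrightarrow> (\<exists>\<beta>. blending_functions S w \<beta>)"

definition toric_fiber_product ::
  "nat \<Rightarrow> (nat \<Rightarrow> nat) \<Rightarrow> (nat \<Rightarrow> nat) \<Rightarrow> (nat \<Rightarrow> nat \<Rightarrow> int^'n1::finite) \<Rightarrow> (nat \<Rightarrow> nat \<Rightarrow> int^'n2::finite)
     \<Rightarrow> (int^('n1 + 'n2)) set" where
  "toric_fiber_product r s t b c =
     {vjoin (b i j) (c i k) | i j k. i < r \<and> j < s i \<and> k < t i}"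

end

theory Submission
  imports Defs "HOL-Complex_Analysis.Conformal_Mappings"
begin


definition gpoly :: "'v set \<Rightarrow> (nat \<Rightarrow> bool) \<Rightarrow> (('v \<Rightarrow> complex) \<Rightarrow> complex) \<Rightarrow> bool" where
  "gpoly I P F \<longleftrightarrow> (\<exists>E c. finite (E :: ('v \<Rightarrow> nat) set) \<and>
      (\<forall>e\<in>E. (\<forall>v. v \<notin> I \<longrightarrow> e v = 0) \<and> P (\<Sum>v\<in>I. e v)) \<and>
      F = (\<lambda>y. \<Sum>e\<in>E. c e * (\<Prod>v\<in>I. (y v) ^ e v)))"

lemma gpoly_intro:
  fixes J :: "'j set" and \<epsilon> :: "'j \<Rightarrow> 'v \<Rightarrow> nat"
  assumes "finite J" "\<forall>j\<in>J. (\<forall>v. v \<notin> I \<longrightarrow> \<epsilon> j v = 0) \<and> P (\<Sum>v\<in>I. \<epsilon> j v)"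
    and "F = (\<lambda>y. \<Sum>j\<in>J. c j * (\<Prod>v\<in>I. (y v) ^ \<epsilon> j v))"
  shows "gpoly I P F"
  unfolding gpoly_def
proof (intro exI conjI)
  show "finite (\<epsilon> ` J)" using assms by simp
  show "\<forall>e\<in>\<epsilon> ` J. (\<forall>v. v \<notin> I \<longrightarrow> e v = 0) \<and> P (\<Sum>v\<in>I. e v)" using assms(2) by auto
  show "F = (\<lambda>y. \<Sum>e\<in>\<epsilon> ` J. (\<Sum>j\<in>{j\<in>J. \<epsilon> j = e}. c j) * (\<Prod>v\<in>I. (y v) ^ e v))"
  proof
    fix y
    have "(\<Sum>e\<in>\<epsilon> ` J. (\<Sum>j\<in>{j\<in>J. \<epsilon> j = e}. c j) * (\<Prod>v\<in>I. (y v) ^ e v))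
        = (\<Sum>e\<in>\<epsilon> ` J. (\<Sum>j\<in>{j\<in>J. \<epsilon> j = e}. c j * (\<Prod>v\<in>I. (y v) ^ \<epsilon> j v)))"
      by (auto simp: sum_distrib_right intro!: sum.cong)
    also have "\<dots> = (\<Sum>j\<in>J. c j * (\<Prod>v\<in>I. (y v) ^ \<epsilon> j v))"
      using sum.image_gen[OF assms(1), of "\<lambda>j. c j * (\<Prod>v\<in>I. (y v) ^ \<epsilon> j v)" \<epsilon>] by simp
    finally show "F y = (\<Sum>e\<in>\<epsilon> ` J. (\<Sum>j\<in>{j\<in>J. \<epsilon> j = e}. c j) * (\<Prod>v\<in>I. (y v) ^ e v))"
      using assms(3) by simp
  qed
qed

lemma gpoly_mono: "gpoly I P F \<Longrightarrow> (\<And>k. P k \<Longrightarrow> Q k) \<Longrightarrow> gpoly I Q F"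
  unfolding gpoly_def by blast

lemma gpoly_const: "gpoly I (\<lambda>k. k = 0) (\<lambda>_. c)"
  by (rule gpoly_intro[where J="{()}" and \<epsilon>="\<lambda>_ _. 0" and c="\<lambda>_. c"]) simp_all

lemma gpoly_zero: "gpoly I P (\<lambda>_. 0)"
  by (rule gpoly_intro[where J="{}::unit set"]) auto

lemma gpoly_var: assumes "finite I" "v \<in> I" shows "gpoly I (\<lambda>k. k = 1) (\<lambda>y. y v)"
proof (rule gpoly_intro[where J="{()}" and \<epsilon>="\<lambda>_ u. if u = v then 1 else 0" and c="\<lambda>_. 1"])
  show "\<forall>j\<in>{()}. (\<forall>u. u \<notin> I \<longrightarrow> (if u = v then 1 else 0) = 0) \<and> (\<Sum>u\<in>I. if u = v then 1 else 0) = (1::nat)"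
    using assms by auto
  show "(\<lambda>y. y v) = (\<lambda>y. \<Sum>j\<in>{()}. 1 * (\<Prod>u\<in>I. y u ^ (if u = v then 1 else 0)))"
    using assms by (auto simp: if_distrib prod.delta cong: if_cong)
qed simp

lemma gpoly_add: assumes "gpoly I P F" "gpoly I P G" shows "gpoly I P (\<lambda>y. F y + G y)"
proof -
  obtain E1 c1 where 1: "finite E1" "\<forall>e\<in>E1. (\<forall>v. v \<notin> I \<longrightarrow> e v = 0) \<and> P (\<Sum>v\<in>I. e v)"
    "F = (\<lambda>y. \<Sum>e\<in>E1. c1 e * (\<Prod>v\<in>I. (y v) ^ e v))" using assms(1) unfolding gpoly_def by blast
  obtain E2 c2 where 2: "finite E2" "\<forall>e\<in>E2. (\<forall>v. v \<notin> I \<longrightarrow> e v = 0) \<and> P (\<Sum>v\<in>I. e v)"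
    "G = (\<lambda>y. \<Sum>e\<in>E2. c2 e * (\<Prod>v\<in>I. (y v) ^ e v))" using assms(2) unfolding gpoly_def by blast
  show ?thesis
    by (rule gpoly_intro[where J="E1 <+> E2" and \<epsilon>="case_sum id id" and c="case_sum c1 c2"])
       (use 1 2 in \<open>auto simp: sum.Plus comp_def\<close>)
qed

lemma gpoly_mult: assumes "gpoly I P F" "gpoly I Q G"
  shows "gpoly I (\<lambda>k. \<exists>a b. P a \<and> Q b \<and> k = a + b) (\<lambda>y. F y * G y)"
proof -
  obtain E1 c1 where 1: "finite E1" "\<forall>e\<in>E1. (\<forall>v. v \<notin> I \<longrightarrow> e v = 0) \<and> P (\<Sum>v\<in>I. e v)"
    "F = (\<lambda>y. \<Sum>e\<in>E1. c1 e * (\<Prod>v\<in>I. (y v) ^ e v))" using assms(1) unfolding gpoly_def by blast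
  obtain E2 c2 where 2: "finite E2" "\<forall>e\<in>E2. (\<forall>v. v \<notin> I \<longrightarrow> e v = 0) \<and> Q (\<Sum>v\<in>I. e v)"
    "G = (\<lambda>y. \<Sum>e\<in>E2. c2 e * (\<Prod>v\<in>I. (y v) ^ e v))" using assms(2) unfolding gpoly_def by blast
  show ?thesis
  proof (rule gpoly_intro[where J="E1 \<times> E2" and \<epsilon>="\<lambda>(e1,e2) v. e1 v + e2 v" and c="\<lambda>(e1,e2). c1 e1 * c2 e2"])
    show "finite (E1 \<times> E2)" using 1 2 by simp
    show "\<forall>j\<in>E1 \<times> E2. (\<forall>v. v \<notin> I \<longrightarrow> (case j of (e1, e2) \<Rightarrow> \<lambda>v. e1 v + e2 v) v = 0) \<and>
        (\<exists>a b. P a \<and> Q b \<and> (\<Sum>v\<in>I. (case j of (e1, e2) \<Rightarrow> \<lambda>v. e1 v + e2 v) v) = a + b)"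
      using 1(2) 2(2) by (auto simp: sum.distrib)
    show "(\<lambda>y. F y * G y) = (\<lambda>y. \<Sum>j\<in>E1 \<times> E2. (case j of (e1, e2) \<Rightarrow> c1 e1 * c2 e2) *
          (\<Prod>v\<in>I. y v ^ (case j of (e1, e2) \<Rightarrow> \<lambda>v. e1 v + e2 v) v))"
      by (auto simp: 1(3) 2(3) sum_product sum.cartesian_product power_add prod.distrib
          intro!: ext sum.cong)
  qed
qed

lemma gpoly_cmult: assumes "gpoly I P F" shows "gpoly I P (\<lambda>y. c * F y)"
  using gpoly_mult[OF gpoly_const[of I c] assms] by (rule gpoly_mono) auto

lemma gpoly_sum: assumes "finite A" "\<And>a. a \<in> A \<Longrightarrow> gpoly I P (F a)"
  shows "gpoly I P (\<lambda>y. \<Sum>a\<in>A. F a y)"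
  using assms by (induction A rule: finite_induct) (auto intro: gpoly_zero gpoly_add)

lemma hpoly_prod: assumes "finite A" "\<And>a. a \<in> A \<Longrightarrow> gpoly I (\<lambda>k. k = d a) (F a)"
  shows "gpoly I (\<lambda>k. k = (\<Sum>a\<in>A. d a)) (\<lambda>y. \<Prod>a\<in>A. F a y)"
  using assms
proof (induction A rule: finite_induct)
  case empty then show ?case using gpoly_const[of I 1] by simp
next
  case (insert x A)
  have "gpoly I (\<lambda>k. \<exists>a b. a = d x \<and> b = (\<Sum>a\<in>A. d a) \<and> k = a + b) (\<lambda>y. F x y * (\<Prod>a\<in>A. F a y))"
    by (rule gpoly_mult) (use insert in auto)
  then show ?case using insert by (auto elim: gpoly_mono)
qed

lemma hpoly_power: assumes "gpoly I (\<lambda>k. k = d) F"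
  shows "gpoly I (\<lambda>k. k = n * d) (\<lambda>y. F y ^ n)"
  using hpoly_prod[of "{..<n}" I "\<lambda>_. d" "\<lambda>_. F"] assms by simp

lemma gpoly_prod: assumes "finite A" "\<And>a. a \<in> A \<Longrightarrow> gpoly I (\<lambda>_. True) (F a)"
  shows "gpoly I (\<lambda>_. True) (\<lambda>y. \<Prod>a\<in>A. F a y)"
  using assms
proof (induction A rule: finite_induct)
  case empty then show ?case using gpoly_const[of I 1] by (auto elim: gpoly_mono)
next
  case (insert x A)
  have "gpoly I (\<lambda>k. \<exists>a b. True \<and> True \<and> k = a + b) (\<lambda>y. F x y * (\<Prod>a\<in>A. F a y))"
    by (rule gpoly_mult) (use insert in auto)
  then show ?case using insert by (auto elim: gpoly_mono)
qed

lemma gpoly_hpoly: "gpoly I (\<lambda>k. k = d) F \<Longrightarrow> hpoly I F"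
  unfolding gpoly_def hpoly_def by blast

lemma cpoly_gpoly: "gpoly (UNIV::'n::finite set) (\<lambda>_. True) (\<lambda>y. f (vec_lambda y)) \<Longrightarrow> cpoly f"
proof -
  assume "gpoly (UNIV::'n set) (\<lambda>_. True) (\<lambda>y. f (vec_lambda y))"
  then obtain E c where "finite E" "(\<lambda>y. f (vec_lambda y)) = (\<lambda>y. \<Sum>e\<in>E. c e * (\<Prod>v\<in>UNIV. (y v) ^ e v))"
    unfolding gpoly_def by blast
  then have "f = (\<lambda>x. \<Sum>e\<in>E. c e * (\<Prod>l\<in>UNIV. (x $ l) ^ e l))"
    by (metis (no_types, lifting) ext vec_lambda_eta)
  then show "cpoly f" unfolding cpoly_def using \<open>finite E\<close> by blast
qed

lemma gpoly_cpoly: "cpoly f \<Longrightarrow> gpoly (UNIV::'n::finite set) (\<lambda>_. True) (\<lambda>y. f (vec_lambda y))"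
  unfolding cpoly_def gpoly_def by (auto simp: fun_eq_iff) blast


lemma gpoly_holo: assumes "gpoly I P F" "finite I" "\<And>v. v \<in> I \<Longrightarrow> (\<lambda>\<tau>. Y \<tau> v) holomorphic_on S"
  shows "(\<lambda>\<tau>. F (Y \<tau>)) holomorphic_on S"
proof -
  obtain E c where "finite E" "F = (\<lambda>y. \<Sum>e\<in>E. c e * (\<Prod>v\<in>I. (y v) ^ e v))"
    using assms(1) unfolding gpoly_def by blast
  then show ?thesis using assms(3)
    by (auto intro!: holomorphic_intros)
qed

lemma gpoly_cont: assumes "gpoly I P F" "finite I" "\<And>v. v \<in> I \<Longrightarrow> continuous_on S (\<lambda>\<tau>. Y \<tau> v)"
  shows "continuous_on S (\<lambda>\<tau>. F (Y \<tau>))"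
proof -
  obtain E c where "finite E" "F = (\<lambda>y. \<Sum>e\<in>E. c e * (\<Prod>v\<in>I. (y v) ^ e v))"
    using assms(1) unfolding gpoly_def by blast
  then show ?thesis using assms(3)
    by (auto intro!: continuous_intros)
qed

lemma cpoly_cont: assumes "cpoly f" "continuous_on S Y" shows "continuous_on S (\<lambda>\<tau>. f (Y \<tau>))"
proof -
  have "continuous_on S (\<lambda>\<tau>. (\<lambda>y. f (vec_lambda y)) ((\<lambda>\<tau> l. Y \<tau> $ l) \<tau>))"
    by (rule gpoly_cont[OF gpoly_cpoly[OF assms(1)]]) (auto intro!: continuous_intros assms(2))
  then show ?thesis by simp
qed

lemma torus_identity:
  fixes f g :: "complex^'n::finite \<Rightarrow> complex"
  assumes holf: "\<And>v. (\<lambda>\<tau>. f (\<chi> l. exp (\<tau> * v$l))) holomorphic_on UNIV"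
    and holg: "\<And>v. (\<lambda>\<tau>. g (\<chi> l. exp (\<tau> * v$l))) holomorphic_on UNIV"
    and zero: "\<And>t. (\<forall>l. t$l \<noteq> 0) \<Longrightarrow> f t * g t = 0"
    and g1: "g (\<chi> l. 1) \<noteq> 0"
    and t: "\<forall>l. t$l \<noteq> 0"
  shows "f t = 0"
proof -
  define v where "v = (\<chi> l. Ln (t$l))"
  define \<phi> where "\<phi> = (\<lambda>\<tau>. f (\<chi> l. exp (\<tau> * v$l)))"
  define \<psi> where "\<psi> = (\<lambda>\<tau>. g (\<chi> l. exp (\<tau> * v$l)))"
  have "continuous (at 0) \<psi>"
    using holg[of v] unfolding \<psi>_def
    by (meson UNIV_I holomorphic_on_imp_continuous_on continuous_on_eq_continuous_at open_UNIV)
  moreover have "\<psi> 0 \<noteq> 0" using g1 by (simp add: \<psi>_def)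
  ultimately obtain e where e: "e > 0" "\<And>y. dist 0 y < e \<Longrightarrow> \<psi> y \<noteq> 0"
    using continuous_at_avoid by blast
  have "\<phi> 1 = 0"
  proof (rule analytic_continuation[of \<phi> UNIV "ball 0 e" 0])
    show "\<phi> holomorphic_on UNIV" using holf[of v] by (simp add: \<phi>_def)
    show "0 islimpt ball (0::complex) e" using e by (simp add: islimpt_ball)
    fix z assume "z \<in> ball (0::complex) e"
    then have "\<psi> z \<noteq> 0" using e by auto
    moreover have "\<phi> z * \<psi> z = 0" unfolding \<phi>_def \<psi>_def by (rule zero) simp
    ultimately show "\<phi> z = 0" by simp
  qed auto
  moreover have "(\<chi> l. exp (1 * v$l)) = t" using t by (simp add: v_def vec_eq_iff)
  ultimately show ?thesis by (simp add: \<phi>_def)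
qed


definition lmap :: "int^'e^'d \<Rightarrow> real^'e \<Rightarrow> real^'d" where
  "lmap M p = (\<chi> m. \<Sum>l\<in>UNIV. real_of_int (M$m$l) * p$l)"

lemma linear_lmap: "linear (lmap M)"
  by (rule linearI) (auto simp: lmap_def vec_eq_iff sum.distrib sum_distrib_left algebra_simps)

lemma lmap_rvec: "lmap M (rvec x) = rvec (M *v x)"
  by (simp add: lmap_def rvec_def vec_eq_iff matrix_vector_mult_def)

lemma prec_generic:
  fixes S :: "(int^'e::finite) set" and blk :: "nat \<Rightarrow> (int^'e) set" and M :: "int^'e^'d::finite"
    and a :: "nat \<Rightarrow> int^'d" and \<phi> :: "nat \<Rightarrow> real^'d \<Rightarrow> real" and bv :: "int^'e \<Rightarrow> complex"
  assumes fin: "finite S" and Sblk: "S = (\<Union>i<r. blk i)"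
    and disj: "\<And>i i'. i < r \<Longrightarrow> i' < r \<Longrightarrow> i \<noteq> i' \<Longrightarrow> blk i \<inter> blk i' = {}"
    and Ma: "\<And>i x. i < r \<Longrightarrow> x \<in> blk i \<Longrightarrow> M *v x = a i"
    and lin: "\<And>j. linear (\<phi> j)"
    and \<phi>a: "\<And>i j. i < r \<Longrightarrow> j < r \<Longrightarrow> \<phi> j (rvec (a i)) = (if i = j then 1 else 0)"
    and prec: "\<And>l. (\<Sum>x\<in>S. bv x * of_int (x$l)) = complex_of_real (p$l)"
    and j: "j < r"
  shows "(\<Sum>x\<in>blk j. bv x) = complex_of_real (\<phi> j (lmap M p))"
proof -
  define lam where "lam i = (\<Sum>x\<in>blk i. bv x)" for i
  have finb: "finite (blk i)" if "i < r" for i using fin Sblk that by auto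
  have sumS: "(\<Sum>x\<in>S. f x) = (\<Sum>i<r. \<Sum>x\<in>blk i. f x)" for f :: "_ \<Rightarrow> complex"
    unfolding Sblk by (rule sum.UNION_disjoint) (use finb disj in auto)
  have m: "(\<Sum>i<r. lam i * of_int (a i $ m)) = complex_of_real (lmap M p $ m)" for m
  proof -
    have "complex_of_real (lmap M p $ m) = (\<Sum>l\<in>UNIV. of_int (M$m$l) * complex_of_real (p$l))"
      by (simp add: lmap_def)
    also have "\<dots> = (\<Sum>l\<in>UNIV. of_int (M$m$l) * (\<Sum>x\<in>S. bv x * of_int (x$l)))"
      by (simp add: prec)
    also have "\<dots> = (\<Sum>x\<in>S. bv x * of_int ((M *v x) $ m))"
      by (simp add: matrix_vector_mult_def sum_distrib_left sum_distrib_right algebra_simps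
          sum.swap[of _ UNIV S])
    also have "\<dots> = (\<Sum>i<r. \<Sum>x\<in>blk i. bv x * of_int ((M *v x) $ m))" by (rule sumS)
    also have "\<dots> = (\<Sum>i<r. lam i * of_int (a i $ m))"
      by (auto simp: lam_def Ma sum_distrib_right intro!: sum.cong)
    finally show ?thesis by simp
  qed
  have re: "lmap M p = (\<Sum>i<r. Re (lam i) *\<^sub>R rvec (a i))"
  proof (rule iffD2[OF vec_eq_iff], rule allI)
    fix m
    have "Re (\<Sum>i<r. lam i * of_int (a i $ m)) = lmap M p $ m" using m[of m] by simp
    then show "lmap M p $ m = (\<Sum>i<r. Re (lam i) *\<^sub>R rvec (a i)) $ m"
      by (simp add: rvec_def Re_sum)
  qed
  have im: "0 = (\<Sum>i<r. Im (lam i) *\<^sub>R rvec (a i))"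
  proof (rule iffD2[OF vec_eq_iff], rule allI)
    fix m
    have "Im (\<Sum>i<r. lam i * of_int (a i $ m)) = 0" using m[of m] by simp
    then show "0 $ m = (\<Sum>i<r. Im (lam i) *\<^sub>R rvec (a i)) $ m"
      by (simp add: rvec_def Im_sum)
  qed
  have app: "\<phi> j (\<Sum>i<r. f i *\<^sub>R rvec (a i)) = f j" for f
  proof -
    have "\<phi> j (\<Sum>i<r. f i *\<^sub>R rvec (a i)) = (\<Sum>i<r. f i * \<phi> j (rvec (a i)))"
      using lin[of j] by (simp add: linear_sum linear_scale)
    also have "\<dots> = (\<Sum>i<r. if i = j then f i else 0)" by (rule sum.cong) (auto simp: \<phi>a j)
    also have "\<dots> = f j" using j by simp
    finally show ?thesis .
  qed
  have "Re (lam j) = \<phi> j (lmap M p)" using app[of "\<lambda>i. Re (lam i)"] re by simp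
  moreover have "Im (lam j) = 0" using app[of "\<lambda>i. Im (lam i)"] im lin[of j]
    by (metis linear_0)
  ultimately show ?thesis unfolding lam_def[symmetric] by (simp add: complex_eq_iff)
qed


lemma vleft_vjoin[simp]: "vleft (vjoin x y) = x" by (simp add: vleft_def vjoin_def)
lemma vright_vjoin[simp]: "vright (vjoin x y) = y" by (simp add: vright_def vjoin_def)
lemma vjoin_split[simp]: "vjoin (vleft m) (vright m) = m"
  by (simp add: vleft_def vright_def vjoin_def vec_eq_iff split: sum.split)
lemma vjoin_inj[simp]: "vjoin x y = vjoin x' y' \<longleftrightarrow> x = x' \<and> y = y'"
  by (metis vleft_vjoin vright_vjoin)
lemma vleft_rvec: "vleft (rvec m) = rvec (vleft m)" by (simp add: vleft_def rvec_def)
lemma vright_rvec: "vright (rvec m) = rvec (vright m)" by (simp add: vright_def rvec_def)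
lemma vleft_cvec: "vleft (cvec m) = cvec (vleft m)" by (simp add: vleft_def cvec_def)
lemma vright_cvec: "vright (cvec m) = cvec (vright m)" by (simp add: vright_def cvec_def)
lemma linear_vleft: "linear (vleft :: real^('a::finite+'b::finite) \<Rightarrow> real^'a)"
  by (rule linearI) (auto simp: vleft_def vec_eq_iff)
lemma linear_vright: "linear (vright :: real^('a::finite+'b::finite) \<Rightarrow> real^'b)"
  by (rule linearI) (auto simp: vright_def vec_eq_iff)

lemma prod_UNIV_sum: "(\<Prod>l\<in>(UNIV::('a::finite+'b::finite) set). f l) = (\<Prod>l\<in>UNIV. f (Inl l)) * (\<Prod>l\<in>UNIV. f (Inr l))"
  by (subst UNIV_Plus_UNIV[symmetric], subst prod.Plus) (auto simp: comp_def)

definition mon :: "complex^'n::finite \<Rightarrow> int^'n \<Rightarrow> complex" where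
  "mon u x = (\<Prod>l\<in>UNIV. (u$l) powi (x$l))"

lemma mon_vjoin: "mon u (vjoin x y) = mon (vleft u) x * mon (vright u) y"
  by (simp add: mon_def prod_UNIV_sum vjoin_def vleft_def vright_def)

lemma mon_nz: "\<forall>l. u$l \<noteq> 0 \<Longrightarrow> mon u x \<noteq> 0"
  by (simp add: mon_def)

lemma mon_exp: "mon (\<chi> l. exp (f l)) x = exp (\<Sum>l\<in>UNIV. of_int (x$l) * f l)"
  by (simp add: mon_def exp_power_int exp_sum)

lemma mon_mult: "mon (\<chi> l. u$l * v$l) x = mon u x * mon v x"
  by (simp add: mon_def power_int_mult_distrib prod.distrib)

lemma mon_one: "mon (\<chi> l. 1) x = 1" by (simp add: mon_def)

lemma mon_holo: "(\<lambda>\<tau>. mon (\<chi> l. exp (\<tau> * v$l)) x) holomorphic_on S"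
  by (simp add: mon_exp) (auto intro!: holomorphic_intros)

definition torus :: "(int^'n::finite) set \<Rightarrow> (int^'n \<Rightarrow> real) \<Rightarrow> complex^'n \<Rightarrow> (int^'n \<Rightarrow> complex)" where
  "torus S w u = (\<lambda>x. if x \<in> S then complex_of_real (w x) * mon u x else 0)"

lemma toric_var_torus: "toric_var S w = proj_closure S {torus S w u | u. \<forall>l. u$l \<noteq> 0}"
  unfolding toric_var_def torus_def mon_def by simp

lemma closure_vanish: "y \<in> proj_closure I Y \<Longrightarrow> hpoly I F \<Longrightarrow> (\<And>z. z \<in> Y \<Longrightarrow> F z = 0) \<Longrightarrow> F y = 0"
  unfolding proj_closure_def by blast

lemma closure_sub: "Y \<subseteq> proj_pts I \<Longrightarrow> Y \<subseteq> proj_closure I Y"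
  unfolding proj_closure_def by blast

lemma closure_mono: "Y \<subseteq> proj_closure I Z \<Longrightarrow> proj_closure I Y \<subseteq> proj_closure I Z"
  unfolding proj_closure_def by blast

lemma closure_pts: "proj_closure I Y \<subseteq> proj_pts I"
  unfolding proj_closure_def by blast


locale tfp =
  fixes r :: nat and s t :: "nat \<Rightarrow> nat"
    and a :: "nat \<Rightarrow> int^'d::finite"
    and b :: "nat \<Rightarrow> nat \<Rightarrow> int^'d1::finite"
    and c :: "nat \<Rightarrow> nat \<Rightarrow> int^'d2::finite"
    and \<pi>1 :: "int^'d1^'d" and \<pi>2 :: "int^'d2^'d"
    and w :: "int^'d1 \<Rightarrow> real" and w' :: "int^'d2 \<Rightarrow> real"
    and \<beta> :: "int^'d1 \<Rightarrow> 'd1 ratfun" and \<beta>' :: "int^'d2 \<Rightarrow> 'd2 ratfun"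
    and B :: "(int^'d1) set" and C :: "(int^'d2) set"
  assumes s_pos: "\<forall>i<r. s i \<ge> 1" and t_pos: "\<forall>i<r. t i \<ge> 1"
    and A_inj: "inj_on a {..<r}"
    and A_indep: "independent ((\<lambda>i. rvec (a i)) ` {..<r})"
    and B_def: "B = {b i j | i j. i < r \<and> j < s i}"
    and C_def: "C = {c i k | i k. i < r \<and> k < t i}"
    and \<pi>1: "\<forall>i<r. \<forall>j<s i. \<pi>1 *v b i j = a i"
    and \<pi>2: "\<forall>i<r. \<forall>k<t i. \<pi>2 *v c i k = a i"
    and w_pos: "\<forall>x\<in>B. w x > 0" and w'_pos: "\<forall>y\<in>C. w' y > 0"
    and \<beta>: "blending_functions B w \<beta>"
    and \<beta>': "blending_functions C w' \<beta>'"
begin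

definition "Bi i = {b i j | j. j < s i}"
definition "Ci i = {c i k | k. k < t i}"
definition "TT = toric_fiber_product r s t b c"
definition "Ti i = (\<lambda>(x,y). vjoin x y) ` (Bi i \<times> Ci i)"
definition "idx m = (THE i. i < r \<and> vleft m \<in> Bi i)"
definition "ww m = w (vleft m) * w' (vright m)"

lemma Bi_sub: "i < r \<Longrightarrow> Bi i \<subseteq> B" unfolding Bi_def B_def by blast
lemma Ci_sub: "i < r \<Longrightarrow> Ci i \<subseteq> C" unfolding Ci_def C_def by blast
lemma B_blk: "B = (\<Union>i<r. Bi i)" unfolding Bi_def B_def by blast
lemma C_blk: "C = (\<Union>i<r. Ci i)" unfolding Ci_def C_def by blast
lemma fin_Bi: "finite (Bi i)" unfolding Bi_def by simp
lemma fin_Ci: "finite (Ci i)" unfolding Ci_def by simp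
lemma fin_B: "finite B" using B_blk fin_Bi by simp
lemma fin_C: "finite C" using C_blk fin_Ci by simp
lemma Bi_ne: "i < r \<Longrightarrow> b i 0 \<in> Bi i" unfolding Bi_def using s_pos by force
lemma Ci_ne: "i < r \<Longrightarrow> c i 0 \<in> Ci i" unfolding Ci_def using t_pos by force
lemma \<pi>1_Bi: "i < r \<Longrightarrow> x \<in> Bi i \<Longrightarrow> \<pi>1 *v x = a i" unfolding Bi_def using \<pi>1 by blast
lemma \<pi>2_Ci: "i < r \<Longrightarrow> y \<in> Ci i \<Longrightarrow> \<pi>2 *v y = a i" unfolding Ci_def using \<pi>2 by blast
lemma Bi_disj: "i < r \<Longrightarrow> i' < r \<Longrightarrow> i \<noteq> i' \<Longrightarrow> Bi i \<inter> Bi i' = {}"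
  using \<pi>1_Bi[of i] \<pi>1_Bi[of i'] A_inj unfolding inj_on_def by (metis disjoint_iff lessThan_iff)
lemma Ci_disj: "i < r \<Longrightarrow> i' < r \<Longrightarrow> i \<noteq> i' \<Longrightarrow> Ci i \<inter> Ci i' = {}"
  using \<pi>2_Ci[of i] \<pi>2_Ci[of i'] A_inj unfolding inj_on_def by (metis disjoint_iff lessThan_iff)
lemma Bi_uniq: "i < r \<Longrightarrow> i' < r \<Longrightarrow> x \<in> Bi i \<Longrightarrow> x \<in> Bi i' \<Longrightarrow> i = i'"
  using Bi_disj by blast
lemma Ci_uniq: "i < r \<Longrightarrow> i' < r \<Longrightarrow> x \<in> Ci i \<Longrightarrow> x \<in> Ci i' \<Longrightarrow> i = i'"
  using Ci_disj by blast

lemma TT_blk: "TT = (\<Union>i<r. Ti i)"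
  unfolding TT_def toric_fiber_product_def Ti_def Bi_def Ci_def by auto
lemma fin_Ti: "finite (Ti i)" unfolding Ti_def using fin_Bi fin_Ci by simp
lemma fin_TT: "finite TT" using TT_blk fin_Ti by simp
lemma Ti_disj: "i < r \<Longrightarrow> i' < r \<Longrightarrow> i \<noteq> i' \<Longrightarrow> Ti i \<inter> Ti i' = {}"
  unfolding Ti_def using Bi_disj by fastforce
lemma Ti_mem: "vjoin x y \<in> Ti i \<longleftrightarrow> x \<in> Bi i \<and> y \<in> Ci i"
  unfolding Ti_def by auto
lemma Ti_memE: "m \<in> Ti i \<Longrightarrow> vleft m \<in> Bi i \<and> vright m \<in> Ci i"
  unfolding Ti_def by auto
lemma TT_memE: assumes "m \<in> TT" obtains i where "i < r" "vleft m \<in> Bi i" "vright m \<in> Ci i" "m \<in> Ti i"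
  using assms TT_blk Ti_memE by blast
lemma TT_vleft: "m \<in> TT \<Longrightarrow> vleft m \<in> B" using Bi_sub by (metis TT_memE subsetD)
lemma TT_vright: "m \<in> TT \<Longrightarrow> vright m \<in> C" using Ci_sub by (metis TT_memE subsetD)

lemma idx_eq: "i < r \<Longrightarrow> vleft m \<in> Bi i \<Longrightarrow> idx m = i"
  unfolding idx_def using Bi_uniq by (rule the_equality[rotated]) blast+

lemma sum_TT: "(\<Sum>m\<in>TT. f m) = (\<Sum>i<r. \<Sum>x\<in>Bi i. \<Sum>y\<in>Ci i. f (vjoin x y))"
proof -
  have "(\<Sum>m\<in>TT. f m) = (\<Sum>i<r. \<Sum>m\<in>Ti i. f m)"
    unfolding TT_blk by (rule sum.UNION_disjoint) (use fin_Ti Ti_disj in auto)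
  also have "\<dots> = (\<Sum>i<r. \<Sum>x\<in>Bi i. \<Sum>y\<in>Ci i. f (vjoin x y))"
  proof (rule sum.cong[OF refl])
    fix i
    have "(\<Sum>m\<in>Ti i. f m) = (\<Sum>p\<in>Bi i \<times> Ci i. f (vjoin (fst p) (snd p)))"
      unfolding Ti_def by (subst sum.reindex) (auto simp: inj_on_def case_prod_beta)
    also have "\<dots> = (\<Sum>x\<in>Bi i. \<Sum>y\<in>Ci i. f (vjoin x y))"
      by (simp add: sum.cartesian_product case_prod_beta)
    finally show "(\<Sum>m\<in>Ti i. f m) = (\<Sum>x\<in>Bi i. \<Sum>y\<in>Ci i. f (vjoin x y))" .
  qed
  finally show ?thesis .
qed

lemma prod_TT: "(\<Prod>m\<in>TT. f m) = (\<Prod>i<r. \<Prod>m\<in>Ti i. f m)"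
  unfolding TT_blk by (rule prod.UNION_disjoint) (use fin_Ti Ti_disj in auto)
lemma sum_TT': "(\<Sum>m\<in>TT. f m) = (\<Sum>i<r. \<Sum>m\<in>Ti i. f m)"
  unfolding TT_blk by (rule sum.UNION_disjoint) (use fin_Ti Ti_disj in auto)

lemma sum_B: "(\<Sum>x\<in>B. f x) = (\<Sum>i<r. \<Sum>x\<in>Bi i. f x)"
  unfolding B_blk by (rule sum.UNION_disjoint) (use fin_Bi Bi_disj in auto)
lemma sum_C: "(\<Sum>x\<in>C. f x) = (\<Sum>i<r. \<Sum>x\<in>Ci i. f x)"
  unfolding C_blk by (rule sum.UNION_disjoint) (use fin_Ci Ci_disj in auto)

lemma vleft_TT: "vleft ` TT = B"
proof
  show "vleft ` TT \<subseteq> B" using TT_vleft by blast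
  show "B \<subseteq> vleft ` TT"
  proof
    fix x assume "x \<in> B"
    then obtain i where i: "i < r" "x \<in> Bi i" using B_blk by blast
    then have "vjoin x (c i 0) \<in> TT" using TT_blk Ti_mem Ci_ne by blast
    then show "x \<in> vleft ` TT" by force
  qed
qed

lemma vright_TT: "vright ` TT = C"
proof
  show "vright ` TT \<subseteq> C" using TT_vright by blast
  show "C \<subseteq> vright ` TT"
  proof
    fix y assume "y \<in> C"
    then obtain i where i: "i < r" "y \<in> Ci i" using C_blk by blast
    then have "vjoin (b i 0) y \<in> TT" using TT_blk Ti_mem Bi_ne by blast
    then show "y \<in> vright ` TT" by force
  qed
qed

lemma r_pos: "r > 0"
proof (rule ccontr)
  assume "\<not> r > 0"
  then have "B = {}" using B_def by auto
  then show False using \<beta> unfolding blending_functions_def by auto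
qed

lemma TT_ne: "TT \<noteq> {}" using vleft_TT r_pos Bi_ne Bi_sub by blast

end


lemma bf_ratfun: "blending_functions S w \<beta> \<Longrightarrow> s \<in> S \<Longrightarrow> is_ratfun (\<beta> s)"
  unfolding blending_functions_def by blast
lemma bf_sum1: "blending_functions S w \<beta> \<Longrightarrow> (\<forall>s\<in>S. rf_defined (\<beta> s) x) \<Longrightarrow> (\<Sum>s\<in>S. rf_eval (\<beta> s) x) = 1"
  unfolding blending_functions_def by blast
lemma bf_Y: "blending_functions S w \<beta> \<Longrightarrow>
   {(\<lambda>s. if s \<in> S then rf_eval (\<beta> s) x else 0) | x. \<forall>s\<in>S. rf_defined (\<beta> s) x} \<subseteq> toric_var S w"
  unfolding blending_functions_def Let_def by blast
lemma bf_Ycl: "blending_functions S w \<beta> \<Longrightarrow>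
   proj_closure S {(\<lambda>s. if s \<in> S then rf_eval (\<beta> s) x else 0) | x. \<forall>s\<in>S. rf_defined (\<beta> s) x} = toric_var S w"
  unfolding blending_functions_def Let_def by blast
lemma bf_relint: "blending_functions S w \<beta> \<Longrightarrow> p \<in> rel_interior (convex hull (rvec ` S)) \<Longrightarrow> s \<in> S \<Longrightarrow>
   rf_defined (\<beta> s) (cvec p) \<and> (\<exists>u::real. u \<ge> 0 \<and> rf_eval (\<beta> s) (cvec p) = complex_of_real u)"
  unfolding blending_functions_def by blast
lemma bf_prec: "blending_functions S w \<beta> \<Longrightarrow> p \<in> convex hull (rvec ` S) \<Longrightarrow> (\<forall>s\<in>S. rf_defined (\<beta> s) (cvec p)) \<Longrightarrow>
   (\<Sum>s\<in>S. rf_eval (\<beta> s) (cvec p) * of_int (s $ l)) = complex_of_real (p $ l)"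
  unfolding blending_functions_def by (auto simp: cvec_def)

lemma rvec_inj: "rvec x = rvec y \<Longrightarrow> x = y"
  by (simp add: rvec_def vec_eq_iff)

context tfp begin

definition "\<phi> j = (SOME g. linear g \<and> (\<forall>i<r. g (rvec (a i)) = (if i = j then 1 else (0::real))))"

lemma \<phi>_ex: "\<exists>g. linear g \<and> (\<forall>i<r. g (rvec (a i)) = (if i = j then 1 else (0::real)))"
proof -
  have "\<exists>g. linear g \<and> (\<forall>x\<in>(\<lambda>i. rvec (a i)) ` {..<r}. g x = (if j < r \<and> x = rvec (a j) then 1 else (0::real)))"
    by (rule linear_independent_extend[OF A_indep])
  then obtain g where g: "linear g" "\<forall>x\<in>(\<lambda>i. rvec (a i)) ` {..<r}. g x = (if j < r \<and> x = rvec (a j) then 1 else (0::real))"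
    by blast
  have "g (rvec (a i)) = (if i = j then 1 else 0)" if "i < r" for i
  proof -
    have "g (rvec (a i)) = (if j < r \<and> rvec (a i) = rvec (a j) then 1 else 0)" using g(2) that by blast
    moreover have "rvec (a i) = rvec (a j) \<Longrightarrow> j < r \<Longrightarrow> i = j"
    proof -
      assume "rvec (a i) = rvec (a j)"
      then have "a i = a j" by (rule rvec_inj)
      moreover assume "j < r"
      ultimately show "i = j" using A_inj that unfolding inj_on_def by (metis lessThan_iff)
    qed
    ultimately show ?thesis using that by auto
  qed
  then show ?thesis using g(1) by blast
qed

lemma \<phi>_lin: "linear (\<phi> j)" and \<phi>_a: "i < r \<Longrightarrow> \<phi> j (rvec (a i)) = (if i = j then 1 else 0)"
  using someI_ex[OF \<phi>_ex[of j]] unfolding \<phi>_def by auto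

definition "\<psi>1 j p = \<phi> j (lmap \<pi>1 p)"
definition "\<psi>2 j q = \<phi> j (lmap \<pi>2 q)"
definition "Pp = convex hull (rvec ` B)"
definition "Qq = convex hull (rvec ` C)"
definition "HT = convex hull (rvec ` TT)"

lemma lin_\<psi>1: "linear (\<psi>1 j)"
proof -
  have "linear (\<phi> j \<circ> lmap \<pi>1)" by (rule linear_compose[OF linear_lmap \<phi>_lin])
  then show ?thesis unfolding \<psi>1_def[abs_def] o_def .
qed
lemma lin_\<psi>2: "linear (\<psi>2 j)"
proof -
  have "linear (\<phi> j \<circ> lmap \<pi>2)" by (rule linear_compose[OF linear_lmap \<phi>_lin])
  then show ?thesis unfolding \<psi>2_def[abs_def] o_def .
qed

lemma \<psi>1_gen: "i < r \<Longrightarrow> x \<in> Bi i \<Longrightarrow> \<psi>1 j (rvec x) = (if i = j then 1 else 0)"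
  by (simp add: \<psi>1_def lmap_rvec \<pi>1_Bi \<phi>_a)
lemma \<psi>2_gen: "i < r \<Longrightarrow> y \<in> Ci i \<Longrightarrow> \<psi>2 j (rvec y) = (if i = j then 1 else 0)"
  by (simp add: \<psi>2_def lmap_rvec \<pi>2_Ci \<phi>_a)

lemma precB: assumes "p \<in> Pp" "\<forall>x\<in>B. rf_defined (\<beta> x) (cvec p)" "j < r"
  shows "(\<Sum>x\<in>Bi j. rf_eval (\<beta> x) (cvec p)) = complex_of_real (\<psi>1 j p)"
  unfolding \<psi>1_def
  by (rule prec_generic[OF fin_B B_blk Bi_disj \<pi>1_Bi \<phi>_lin \<phi>_a bf_prec[OF \<beta>] assms(3)])
     (use assms in \<open>simp_all add: Pp_def\<close>)

lemma precC: assumes "q \<in> Qq" "\<forall>y\<in>C. rf_defined (\<beta>' y) (cvec q)" "j < r"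
  shows "(\<Sum>y\<in>Ci j. rf_eval (\<beta>' y) (cvec q)) = complex_of_real (\<psi>2 j q)"
  unfolding \<psi>2_def
  by (rule prec_generic[OF fin_C C_blk Ci_disj \<pi>2_Ci \<phi>_lin \<phi>_a bf_prec[OF \<beta>'] assms(3)])
     (use assms in \<open>simp_all add: Qq_def\<close>)

lemma vleft_HT: "vleft ` HT = Pp"
  unfolding HT_def Pp_def convex_hull_linear_image[OF linear_vleft]
  by (simp add: image_image vleft_rvec flip: vleft_TT)
lemma vright_HT: "vright ` HT = Qq"
  unfolding HT_def Qq_def convex_hull_linear_image[OF linear_vright]
  by (simp add: image_image vright_rvec flip: vright_TT)

lemma relint_left: "z \<in> rel_interior HT \<Longrightarrow> vleft z \<in> rel_interior Pp"
  using rel_interior_convex_linear_image[OF linear_vleft, of HT] vleft_HT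
  unfolding HT_def by (auto simp: convex_convex_hull)
lemma relint_right: "z \<in> rel_interior HT \<Longrightarrow> vright z \<in> rel_interior Qq"
  using rel_interior_convex_linear_image[OF linear_vright, of HT] vright_HT
  unfolding HT_def by (auto simp: convex_convex_hull)

lemma lmap_HT: assumes "z \<in> HT" shows "lmap \<pi>1 (vleft z) = lmap \<pi>2 (vright z)"
proof -
  define h where "h z = lmap \<pi>1 (vleft z) - lmap \<pi>2 (vright z)" for z
  have lh: "linear h" unfolding h_def[abs_def]
    using linear_compose[OF linear_vleft linear_lmap] linear_compose[OF linear_vright linear_lmap]
    by (intro linear_compose_sub) (auto simp: o_def)
  have "HT \<subseteq> {z. h z = 0}"
    unfolding HT_def
  proof (rule hull_minimal)
    show "rvec ` TT \<subseteq> {z. h z = 0}"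
    proof
      fix z assume "z \<in> rvec ` TT"
      then obtain m where m: "m \<in> TT" "z = rvec m" by blast
      then obtain i where "i < r" "vleft m \<in> Bi i" "vright m \<in> Ci i" by (meson TT_memE)
      then show "z \<in> {z. h z = 0}"
        by (simp add: m h_def vleft_rvec vright_rvec lmap_rvec \<pi>1_Bi \<pi>2_Ci)
    qed
    show "convex {z. h z = 0}"
      using convex_linear_vimage[OF lh, of "{0}"] by (simp add: vimage_def)
  qed
  then show ?thesis using assms by (auto simp: h_def)
qed

lemma \<psi>1_nonneg: "p \<in> Pp \<Longrightarrow> \<psi>1 j p \<ge> 0"
proof -
  assume "p \<in> Pp"
  moreover have "Pp \<subseteq> {p. \<psi>1 j p \<ge> 0}"
    unfolding Pp_def
  proof (rule hull_minimal)
    show "rvec ` B \<subseteq> {p. \<psi>1 j p \<ge> 0}"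
    proof
      fix z assume "z \<in> rvec ` B"
      then obtain x where "x \<in> B" "z = rvec x" by blast
      moreover then obtain i where "i < r" "x \<in> Bi i" using B_blk by blast
      ultimately show "z \<in> {p. \<psi>1 j p \<ge> 0}" using \<psi>1_gen by simp
    qed
    show "convex {p. \<psi>1 j p \<ge> 0}"
      using convex_linear_vimage[OF lin_\<psi>1, of "{0..}"] by (simp add: vimage_def)
  qed
  ultimately show ?thesis by blast
qed

lemma \<psi>1_pos: assumes "p \<in> rel_interior Pp" "j < r" shows "\<psi>1 j p > 0"
proof (rule ccontr)
  assume "\<not> \<psi>1 j p > 0"
  moreover have "\<psi>1 j p \<ge> 0" using \<psi>1_nonneg assms(1) rel_interior_subset by blast
  ultimately have 0: "\<psi>1 j p = 0" by simp
  have x: "rvec (b j 0) \<in> Pp" unfolding Pp_def using Bi_ne[OF assms(2)] Bi_sub[OF assms(2)]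
    by (meson hull_inc image_eqI subsetD)
  then have "rvec (b j 0) \<in> affine hull Pp" by (simp add: hull_inc)
  then obtain m where m: "m > 1" "(1 - m) *\<^sub>R rvec (b j 0) + m *\<^sub>R p \<in> Pp"
    using convex_rel_interior_if[of Pp p] assms(1) unfolding Pp_def by (auto simp: convex_convex_hull)
  then have "\<psi>1 j ((1 - m) *\<^sub>R rvec (b j 0) + m *\<^sub>R p) \<ge> 0" using \<psi>1_nonneg by blast
  moreover have "\<psi>1 j ((1 - m) *\<^sub>R rvec (b j 0) + m *\<^sub>R p) = 1 - m"
    using lin_\<psi>1[of j] \<psi>1_gen[OF assms(2) Bi_ne[OF assms(2)], of j] 0
    by (simp add: linear_add linear_scale)
  ultimately show False using m by simp
qed

end


lemma cpoly_gp: "cpoly f \<longleftrightarrow> gpoly (UNIV::'n::finite set) (\<lambda>_. True) (\<lambda>y. f (vec_lambda y))"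
  using cpoly_gpoly gpoly_cpoly by blast

lemma cpoly_const: "cpoly (\<lambda>_::complex^'n::finite. c)"
  unfolding cpoly_gp using gpoly_const by (rule gpoly_mono) simp

lemma cpoly_mult: "cpoly f \<Longrightarrow> cpoly g \<Longrightarrow> cpoly (\<lambda>x::complex^'n::finite. f x * g x)"
  unfolding cpoly_gp by (drule (1) gpoly_mult) (erule gpoly_mono, simp)

lemma cpoly_add: "cpoly f \<Longrightarrow> cpoly g \<Longrightarrow> cpoly (\<lambda>x::complex^'n::finite. f x + g x)"
  unfolding cpoly_gp by (rule gpoly_add)

lemma cpoly_sum: "finite A \<Longrightarrow> (\<And>a. a \<in> A \<Longrightarrow> cpoly (f a)) \<Longrightarrow> cpoly (\<lambda>x::complex^'n::finite. \<Sum>a\<in>A. f a x)"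
  unfolding cpoly_gp by (rule gpoly_sum)

lemma cpoly_prod: "finite A \<Longrightarrow> (\<And>a. a \<in> A \<Longrightarrow> cpoly (f a)) \<Longrightarrow> cpoly (\<lambda>x::complex^'n::finite. \<Prod>a\<in>A. f a x)"
  unfolding cpoly_gp by (rule gpoly_prod)

lemma gpoly_varpow: "finite I \<Longrightarrow> v \<in> I \<Longrightarrow> gpoly I (\<lambda>_. True) (\<lambda>y. y v ^ n)"
  using hpoly_power[OF gpoly_var, of I v n] by (auto elim: gpoly_mono)

lemma cpoly_vleft: assumes "cpoly f" shows "cpoly (\<lambda>X::complex^('a::finite+'b::finite). f (vleft X))"
proof -
  obtain E c where f: "f = (\<lambda>x. \<Sum>e\<in>E. c e * (\<Prod>l\<in>UNIV. (x $ l) ^ e l))" "finite E"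
    using assms unfolding cpoly_def by blast
  have "gpoly UNIV (\<lambda>_. True) (\<lambda>Y::'a+'b \<Rightarrow> complex. \<Sum>e\<in>E. c e * (\<Prod>l\<in>UNIV. (Y (Inl l)) ^ e l))"
    by (intro gpoly_sum gpoly_cmult gpoly_prod gpoly_varpow f(2)) auto
  then show ?thesis unfolding cpoly_gp by (simp add: f vleft_def)
qed

lemma cpoly_vright: assumes "cpoly f" shows "cpoly (\<lambda>X::complex^('a::finite+'b::finite). f (vright X))"
proof -
  obtain E c where f: "f = (\<lambda>x. \<Sum>e\<in>E. c e * (\<Prod>l\<in>UNIV. (x $ l) ^ e l))" "finite E"
    using assms unfolding cpoly_def by blast
  have "gpoly UNIV (\<lambda>_. True) (\<lambda>Y::'a+'b \<Rightarrow> complex. \<Sum>e\<in>E. c e * (\<Prod>l\<in>UNIV. (Y (Inr l)) ^ e l))"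
    by (intro gpoly_sum gpoly_cmult gpoly_prod gpoly_varpow f(2)) auto
  then show ?thesis unfolding cpoly_gp by (simp add: f vright_def)
qed

lemma cont_cvec_path: "continuous_on UNIV (\<lambda>\<tau>::real. cvec (p - \<tau> *\<^sub>R (p - p0)))"
  unfolding cvec_def by (intro continuous_intros)

context tfp begin

lemma Pp_ne: "Pp \<noteq> {}"
proof -
  have "b 0 0 \<in> B" using r_pos Bi_ne Bi_sub by blast
  then show ?thesis unfolding Pp_def by (metis convex_hull_eq_empty empty_iff image_eqI)
qed
lemma Qq_ne: "Qq \<noteq> {}"
proof -
  have "c 0 0 \<in> C" using r_pos Ci_ne Ci_sub by blast
  then show ?thesis unfolding Qq_def by (metis convex_hull_eq_empty empty_iff image_eqI)
qed

lemma generic_part: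
  fixes S :: "(int^'e::finite) set" and S' and \<gamma> :: "int^'e \<Rightarrow> 'e ratfun" and K :: "(real^'e) set"
    and \<psi> :: "real^'e \<Rightarrow> real"
  assumes cvx: "convex K" and ne: "K \<noteq> {}" and pK: "p \<in> K" and fin: "finite S'"
    and rat: "\<And>x. x \<in> S' \<Longrightarrow> is_ratfun (\<gamma> x)"
    and def: "\<And>x. x \<in> S' \<Longrightarrow> rf_defined (\<gamma> x) (cvec p)"
    and ri: "\<And>q. q \<in> rel_interior K \<Longrightarrow> (\<Sum>x\<in>S'. rf_eval (\<gamma> x) (cvec q)) = complex_of_real (\<psi> q)"
    and lin: "linear \<psi>"
  shows "(\<Sum>x\<in>S'. rf_eval (\<gamma> x) (cvec p)) = complex_of_real (\<psi> p)"
proof -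
  obtain p0 where p0: "p0 \<in> rel_interior K" using ne rel_interior_eq_empty[OF cvx] by blast
  define pt where "pt \<tau> = p - \<tau> *\<^sub>R (p - p0)" for \<tau> :: real
  define g where "g \<tau> = (\<Sum>x\<in>S'. fst (\<gamma> x) (cvec (pt \<tau>)) / snd (\<gamma> x) (cvec (pt \<tau>))) - complex_of_real (\<psi> (pt \<tau>))" for \<tau>
  have cfst: "continuous_on UNIV (\<lambda>\<tau>. fst (\<gamma> x) (cvec (pt \<tau>)))" if "x \<in> S'" for x
    using rat[OF that] unfolding is_ratfun_def pt_def by (intro cpoly_cont cont_cvec_path) auto
  have csnd: "continuous_on UNIV (\<lambda>\<tau>. snd (\<gamma> x) (cvec (pt \<tau>)))" if "x \<in> S'" for x
    using rat[OF that] unfolding is_ratfun_def pt_def by (intro cpoly_cont cont_cvec_path) auto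
  have cpsi: "continuous_on UNIV (\<lambda>\<tau>. complex_of_real (\<psi> (pt \<tau>)))"
    unfolding pt_def
    by (intro continuous_intros linear_continuous_on_compose[OF _ lin])
  have c1: "isCont (\<lambda>\<tau>. fst (\<gamma> x) (cvec (pt \<tau>)) / snd (\<gamma> x) (cvec (pt \<tau>))) 0" if x: "x \<in> S'" for x
  proof (rule isCont_divide)
    show "isCont (\<lambda>\<tau>. fst (\<gamma> x) (cvec (pt \<tau>))) 0" using cfst[OF x] by (simp add: continuous_on_eq_continuous_at)
    show "isCont (\<lambda>\<tau>. snd (\<gamma> x) (cvec (pt \<tau>))) 0" using csnd[OF x] by (simp add: continuous_on_eq_continuous_at)
    show "snd (\<gamma> x) (cvec (pt 0)) \<noteq> 0" using def[OF x] by (simp add: pt_def rf_defined_def)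
  qed
  have c2: "isCont (\<lambda>\<tau>. complex_of_real (\<psi> (pt \<tau>))) 0" using cpsi by (simp add: continuous_on_eq_continuous_at)
  have "isCont g 0"
    unfolding g_def by (rule continuous_diff[OF continuous_sum c2]) (use c1 in blast)
  then have lim1: "(g \<longlongrightarrow> g 0) (at_right 0)"
    by (simp add: isCont_def filterlim_at_split)
  have ev: "eventually (\<lambda>\<tau>. g \<tau> = 0) (at_right 0)"
  proof -
    have "eventually (\<lambda>\<tau>. \<tau> \<in> {0<..<1::real}) (at_right 0)" by (rule eventually_at_right_real) simp
    then show ?thesis
    proof (rule eventually_mono)
      fix \<tau> :: real assume "\<tau> \<in> {0<..<1}"
      then have "pt \<tau> \<in> rel_interior K" unfolding pt_def
        by (intro rel_interior_convex_shrink[OF cvx p0 pK]) auto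
      from ri[OF this] show "g \<tau> = 0" by (simp add: g_def rf_eval_def)
    qed
  qed
  have lim2: "(g \<longlongrightarrow> 0) (at_right 0)" using tendsto_eventually[OF ev] .
  have "g 0 = 0" using tendsto_unique[OF _ lim1 lim2] by simp
  then show ?thesis by (simp add: g_def pt_def rf_eval_def)
qed

lemma precB_part: assumes "p \<in> Pp" "j < r" "\<forall>x\<in>Bi j. rf_defined (\<beta> x) (cvec p)"
  shows "(\<Sum>x\<in>Bi j. rf_eval (\<beta> x) (cvec p)) = complex_of_real (\<psi>1 j p)"
proof (rule generic_part[where K=Pp])
  show "convex Pp" unfolding Pp_def by (rule convex_convex_hull)
  fix q assume q: "q \<in> rel_interior Pp"
  then have "\<forall>x\<in>B. rf_defined (\<beta> x) (cvec q)" using bf_relint[OF \<beta>] unfolding Pp_def by blast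
  then show "(\<Sum>x\<in>Bi j. rf_eval (\<beta> x) (cvec q)) = complex_of_real (\<psi>1 j q)"
    using precB[OF _ _ assms(2)] q rel_interior_subset by blast
qed (use assms Pp_ne fin_Bi lin_\<psi>1 bf_ratfun[OF \<beta>] Bi_sub[OF assms(2)] in auto)

lemma precC_part: assumes "q \<in> Qq" "j < r" "\<forall>y\<in>Ci j. rf_defined (\<beta>' y) (cvec q)"
  shows "(\<Sum>y\<in>Ci j. rf_eval (\<beta>' y) (cvec q)) = complex_of_real (\<psi>2 j q)"
proof (rule generic_part[where K=Qq])
  show "convex Qq" unfolding Qq_def by (rule convex_convex_hull)
  fix p assume p: "p \<in> rel_interior Qq"
  then have "\<forall>y\<in>C. rf_defined (\<beta>' y) (cvec p)" using bf_relint[OF \<beta>'] unfolding Qq_def by blast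
  then show "(\<Sum>y\<in>Ci j. rf_eval (\<beta>' y) (cvec p)) = complex_of_real (\<psi>2 j p)"
    using precC[OF _ _ assms(2)] p rel_interior_subset by blast
qed (use assms Qq_ne fin_Ci lin_\<psi>2 bf_ratfun[OF \<beta>'] Ci_sub[OF assms(2)] in auto)

end


context tfp begin

definition "DB P = (\<Prod>x\<in>B. snd (\<beta> x) P)"
definition "DC Q = (\<Prod>y\<in>C. snd (\<beta>' y) Q)"
definition "Lam i P = (\<Sum>x\<in>Bi i. fst (\<beta> x) P * (\<Prod>x'\<in>B-{x}. snd (\<beta> x') P))"
definition "lamv i (Y :: int^'d1 \<Rightarrow> complex) = (\<Sum>x\<in>Bi i. Y x)"
definition "lamB i P = (\<Sum>x\<in>Bi i. rf_eval (\<beta> x) P)"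
definition "lamC i Q = (\<Sum>y\<in>Ci i. rf_eval (\<beta>' y) Q)"
definition "yb P = (\<lambda>x. if x \<in> B then rf_eval (\<beta> x) P else 0)"
definition "yc Q = (\<lambda>y. if y \<in> C then rf_eval (\<beta>' y) Q else 0)"
definition "gam m = ((\<lambda>X. fst (\<beta> (vleft m)) (vleft X) * (\<Prod>x'\<in>B-{vleft m}. snd (\<beta> x') (vleft X))
      * fst (\<beta>' (vright m)) (vright X) * (\<Prod>y'\<in>C-{vright m}. snd (\<beta>' y') (vright X)) * DB (vleft X)),
   (\<lambda>X. DB (vleft X) * DC (vright X) * Lam (idx m) (vleft X)))"
definition "Gf (Y :: int^'d1 \<Rightarrow> complex) (Z :: int^'d2 \<Rightarrow> complex) = (\<lambda>m. if m \<in> TT then Y (vleft m) * Z (vright m) / lamv (idx m) Y else 0)"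
definition "yg X = (\<lambda>m. if m \<in> TT then rf_eval (gam m) X else 0)"

lemma DB_nz: "DB P \<noteq> 0 \<longleftrightarrow> (\<forall>x\<in>B. rf_defined (\<beta> x) P)"
  unfolding DB_def rf_defined_def using fin_B by simp
lemma DC_nz: "DC Q \<noteq> 0 \<longleftrightarrow> (\<forall>y\<in>C. rf_defined (\<beta>' y) Q)"
  unfolding DC_def rf_defined_def using fin_C by simp

lemma prodB_rem: "x \<in> B \<Longrightarrow> DB P \<noteq> 0 \<Longrightarrow> (\<Prod>x'\<in>B-{x}. snd (\<beta> x') P) = DB P / snd (\<beta> x) P"
  unfolding DB_def using fin_B by (simp add: prod.remove)
lemma prodC_rem: "y \<in> C \<Longrightarrow> DC Q \<noteq> 0 \<Longrightarrow> (\<Prod>y'\<in>C-{y}. snd (\<beta>' y') Q) = DC Q / snd (\<beta>' y) Q"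
  unfolding DC_def using fin_C by (simp add: prod.remove)

lemma lamv_yb: "i < r \<Longrightarrow> lamv i (yb P) = lamB i P"
  unfolding lamv_def yb_def lamB_def using Bi_sub by (intro sum.cong) auto

lemma Lam_eq: assumes "DB P \<noteq> 0" "i < r" shows "Lam i P = DB P * lamB i P"
proof -
  have "Lam i P = (\<Sum>x\<in>Bi i. DB P * rf_eval (\<beta> x) P)"
    unfolding Lam_def
  proof (rule sum.cong[OF refl])
    fix x assume "x \<in> Bi i"
    then have x: "x \<in> B" using Bi_sub assms(2) by blast
    then have "snd (\<beta> x) P \<noteq> 0" using assms(1) DB_nz rf_defined_def by blast
    then show "fst (\<beta> x) P * (\<Prod>x'\<in>B - {x}. snd (\<beta> x') P) = DB P * rf_eval (\<beta> x) P"
      using prodB_rem[OF x assms(1)] by (simp add: rf_eval_def)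
  qed
  then show ?thesis by (simp add: lamB_def sum_distrib_left)
qed

lemma gam_def_iff: "rf_defined (gam m) X \<longleftrightarrow> DB (vleft X) \<noteq> 0 \<and> DC (vright X) \<noteq> 0 \<and> Lam (idx m) (vleft X) \<noteq> 0"
  unfolding rf_defined_def gam_def by simp

lemma gam_eval: assumes "i < r" "x \<in> Bi i" "y \<in> Ci i" "DB (vleft X) \<noteq> 0" "DC (vright X) \<noteq> 0"
  shows "rf_eval (gam (vjoin x y)) X = rf_eval (\<beta> x) (vleft X) * rf_eval (\<beta>' y) (vright X) / lamB i (vleft X)"
proof -
  have x: "x \<in> B" and y: "y \<in> C" using assms Bi_sub Ci_sub by blast+
  have sx: "snd (\<beta> x) (vleft X) \<noteq> 0" using assms(4) x DB_nz rf_defined_def by blast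
  have sy: "snd (\<beta>' y) (vright X) \<noteq> 0" using assms(5) y DC_nz rf_defined_def by blast
  have idx: "idx (vjoin x y) = i" by (rule idx_eq[OF assms(1)]) (simp add: assms(2))
  show ?thesis
    unfolding gam_def rf_eval_def fst_conv snd_conv vleft_vjoin vright_vjoin idx
      Lam_eq[OF assms(4,1)] prodB_rem[OF x assms(4)] prodC_rem[OF y assms(5)] lamB_def
    using sx sy assms(4,5) by (simp add: field_simps rf_eval_def)
qed

lemma yg_eq: assumes "DB (vleft X) \<noteq> 0" "DC (vright X) \<noteq> 0"
  shows "yg X = Gf (yb (vleft X)) (yc (vright X))"
proof
  fix m show "yg X m = Gf (yb (vleft X)) (yc (vright X)) m"
  proof (cases "m \<in> TT")
    case True
    then obtain i where i: "i < r" "vleft m \<in> Bi i" "vright m \<in> Ci i" by (meson TT_memE)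
    have "rf_eval (gam m) X = rf_eval (gam (vjoin (vleft m) (vright m))) X" by simp
    also have "\<dots> = rf_eval (\<beta> (vleft m)) (vleft X) * rf_eval (\<beta>' (vright m)) (vright X) / lamB i (vleft X)"
      by (rule gam_eval[OF i assms])
    moreover have "vleft m \<in> B" "vright m \<in> C" using i Bi_sub Ci_sub by blast+
    ultimately show ?thesis using True
      by (simp add: yg_def Gf_def idx_eq[OF i(1,2)] lamv_yb[OF i(1)]) (simp add: yb_def yc_def)
  qed (simp add: yg_def Gf_def)
qed

lemma all_def: "(\<forall>m\<in>TT. rf_defined (gam m) X) \<longleftrightarrow>
   DB (vleft X) \<noteq> 0 \<and> DC (vright X) \<noteq> 0 \<and> (\<forall>i<r. lamB i (vleft X) \<noteq> 0)"
proof
  assume a: "\<forall>m\<in>TT. rf_defined (gam m) X"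
  have m0: "vjoin (b 0 0) (c 0 0) \<in> TT" using r_pos TT_blk Ti_mem Bi_ne Ci_ne by blast
  then have d: "DB (vleft X) \<noteq> 0" "DC (vright X) \<noteq> 0" using a gam_def_iff by blast+
  have "lamB i (vleft X) \<noteq> 0" if "i < r" for i
  proof -
    have "vjoin (b i 0) (c i 0) \<in> TT" using that TT_blk Ti_mem Bi_ne Ci_ne by blast
    then have "Lam (idx (vjoin (b i 0) (c i 0))) (vleft X) \<noteq> 0" using a gam_def_iff by blast
    then show ?thesis using idx_eq[OF that, of "vjoin (b i 0) (c i 0)"] Bi_ne[OF that] Lam_eq[OF d(1) that] by simp
  qed
  then show "DB (vleft X) \<noteq> 0 \<and> DC (vright X) \<noteq> 0 \<and> (\<forall>i<r. lamB i (vleft X) \<noteq> 0)" using d by blast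
next
  assume a: "DB (vleft X) \<noteq> 0 \<and> DC (vright X) \<noteq> 0 \<and> (\<forall>i<r. lamB i (vleft X) \<noteq> 0)"
  show "\<forall>m\<in>TT. rf_defined (gam m) X"
  proof
    fix m assume "m \<in> TT"
    then obtain i where i: "i < r" "vleft m \<in> Bi i" by (meson TT_memE)
    then show "rf_defined (gam m) X" using a Lam_eq[of "vleft X" i] idx_eq[OF i] gam_def_iff by simp
  qed
qed

lemma cond1: assumes "\<forall>m\<in>TT. rf_defined (gam m) X" shows "(\<Sum>m\<in>TT. rf_eval (gam m) X) = 1"
proof -
  have d: "DB (vleft X) \<noteq> 0" "DC (vright X) \<noteq> 0" "\<And>i. i < r \<Longrightarrow> lamB i (vleft X) \<noteq> 0"
    using assms all_def by blast+
  have "(\<Sum>m\<in>TT. rf_eval (gam m) X) = (\<Sum>i<r. \<Sum>x\<in>Bi i. \<Sum>y\<in>Ci i.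
      rf_eval (\<beta> x) (vleft X) * rf_eval (\<beta>' y) (vright X) / lamB i (vleft X))"
    unfolding sum_TT by (intro sum.cong refl gam_eval d) auto
  also have "\<dots> = (\<Sum>i<r. \<Sum>y\<in>Ci i. rf_eval (\<beta>' y) (vright X))"
  proof (rule sum.cong[OF refl])
    fix i assume "i \<in> {..<r}"
    then have "lamB i (vleft X) \<noteq> 0" using d by simp
    then show "(\<Sum>x\<in>Bi i. \<Sum>y\<in>Ci i. rf_eval (\<beta> x) (vleft X) * rf_eval (\<beta>' y) (vright X) / lamB i (vleft X))
        = (\<Sum>y\<in>Ci i. rf_eval (\<beta>' y) (vright X))"
      by (simp add: sum_distrib_left[symmetric] sum_distrib_right[symmetric] sum_divide_distrib[symmetric]
          lamB_def[symmetric] field_simps)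
  qed
  also have "\<dots> = (\<Sum>y\<in>C. rf_eval (\<beta>' y) (vright X))" by (simp add: sum_C)
  also have "\<dots> = 1" using bf_sum1[OF \<beta>'] d(2) DC_nz by blast
  finally show ?thesis .
qed


lemma vjoin_nth_Inl: "vjoin x y $ Inl l = x $ l" by (simp add: vjoin_def)
lemma vjoin_nth_Inr: "vjoin x y $ Inr l = y $ l" by (simp add: vjoin_def)

lemma cond4: assumes z: "z \<in> HT" and d: "\<forall>m\<in>TT. rf_defined (gam m) (cvec z)"
  shows "(\<Sum>m\<in>TT. rf_eval (gam m) (cvec z) * of_int (m $ l)) = cvec z $ l"
proof -
  define p where "p = vleft z"
  define q where "q = vright z"
  have pP: "p \<in> Pp" using vleft_HT z p_def by blast
  have qQ: "q \<in> Qq" using vright_HT z q_def by blast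
  have dd: "DB (cvec p) \<noteq> 0" "DC (cvec q) \<noteq> 0" "\<And>i. i < r \<Longrightarrow> lamB i (cvec p) \<noteq> 0"
    using d all_def[of "cvec z"] by (auto simp: p_def q_def vleft_cvec vright_cvec)
  have allB: "\<forall>x\<in>B. rf_defined (\<beta> x) (cvec p)" using dd(1) DB_nz by blast
  have allC: "\<forall>y\<in>C. rf_defined (\<beta>' y) (cvec q)" using dd(2) DC_nz by blast
  have lamBC: "lamB i (cvec p) = lamC i (cvec q)" if "i < r" for i
  proof -
    have "lamB i (cvec p) = complex_of_real (\<psi>1 i p)" unfolding lamB_def by (rule precB[OF pP allB that])
    also have "\<dots> = complex_of_real (\<psi>2 i q)" using lmap_HT[OF z] by (simp add: \<psi>1_def \<psi>2_def p_def q_def)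
    also have "\<dots> = lamC i (cvec q)" unfolding lamC_def by (rule precC[OF qQ allC that, symmetric])
    finally show ?thesis .
  qed
  have ev: "(\<Sum>m\<in>TT. rf_eval (gam m) (cvec z) * of_int (m $ l)) = (\<Sum>i<r. \<Sum>x\<in>Bi i. \<Sum>y\<in>Ci i.
      rf_eval (\<beta> x) (cvec p) * rf_eval (\<beta>' y) (cvec q) / lamB i (cvec p) * of_int (vjoin x y $ l))"
    unfolding sum_TT using dd
    by (intro sum.cong refl) (auto simp: gam_eval p_def q_def vleft_cvec vright_cvec)
  show ?thesis
  proof (cases l)
    case (Inl l1)
    have "(\<Sum>m\<in>TT. rf_eval (gam m) (cvec z) * of_int (m $ l)) = (\<Sum>i<r. \<Sum>x\<in>Bi i. rf_eval (\<beta> x) (cvec p) * of_int (x $ l1))"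
      unfolding ev
    proof (rule sum.cong[OF refl])
      fix i assume i: "i \<in> {..<r}"
      have "(\<Sum>x\<in>Bi i. \<Sum>y\<in>Ci i. rf_eval (\<beta> x) (cvec p) * rf_eval (\<beta>' y) (cvec q) / lamB i (cvec p) * of_int (vjoin x y $ l))
          = (\<Sum>x\<in>Bi i. rf_eval (\<beta> x) (cvec p) * of_int (x $ l1) * (lamC i (cvec q) / lamB i (cvec p)))"
        by (simp add: Inl vjoin_nth_Inl lamC_def sum_distrib_left sum_distrib_right sum_divide_distrib algebra_simps)
      also have "\<dots> = (\<Sum>x\<in>Bi i. rf_eval (\<beta> x) (cvec p) * of_int (x $ l1))"
        using lamBC[of i] dd(3)[of i] i by simp
      finally show "(\<Sum>x\<in>Bi i. \<Sum>y\<in>Ci i. rf_eval (\<beta> x) (cvec p) * rf_eval (\<beta>' y) (cvec q) / lamB i (cvec p) * of_int (vjoin x y $ l))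
          = (\<Sum>x\<in>Bi i. rf_eval (\<beta> x) (cvec p) * of_int (x $ l1))" .
    qed
    also have "\<dots> = (\<Sum>x\<in>B. rf_eval (\<beta> x) (cvec p) * of_int (x $ l1))" by (simp add: sum_B)
    also have "\<dots> = complex_of_real (p $ l1)" using bf_prec[OF \<beta>] pP allB unfolding Pp_def by blast
    also have "\<dots> = cvec z $ l" by (simp add: Inl p_def cvec_def vleft_def)
    finally show ?thesis .
  next
    case (Inr l2)
    have "(\<Sum>m\<in>TT. rf_eval (gam m) (cvec z) * of_int (m $ l)) = (\<Sum>i<r. \<Sum>y\<in>Ci i. rf_eval (\<beta>' y) (cvec q) * of_int (y $ l2))"
      unfolding ev
    proof (rule sum.cong[OF refl])
      fix i assume i: "i \<in> {..<r}"
      have nz: "lamB i (cvec p) \<noteq> 0" using dd(3)[of i] i by simp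
      have "(\<Sum>x\<in>Bi i. \<Sum>y\<in>Ci i. rf_eval (\<beta> x) (cvec p) * rf_eval (\<beta>' y) (cvec q) / lamB i (cvec p) * of_int (vjoin x y $ l))
          = (\<Sum>y\<in>Ci i. \<Sum>x\<in>Bi i. rf_eval (\<beta> x) (cvec p) * (rf_eval (\<beta>' y) (cvec q) * of_int (y $ l2) / lamB i (cvec p)))"
        by (subst sum.swap) (simp add: Inr vjoin_nth_Inr algebra_simps)
      also have "\<dots> = (\<Sum>y\<in>Ci i. lamB i (cvec p) * (rf_eval (\<beta>' y) (cvec q) * of_int (y $ l2) / lamB i (cvec p)))"
        unfolding lamB_def by (simp only: sum_distrib_right)
      also have "\<dots> = (\<Sum>y\<in>Ci i. rf_eval (\<beta>' y) (cvec q) * of_int (y $ l2))"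
        using nz by simp
      finally show "(\<Sum>x\<in>Bi i. \<Sum>y\<in>Ci i. rf_eval (\<beta> x) (cvec p) * rf_eval (\<beta>' y) (cvec q) / lamB i (cvec p) * of_int (vjoin x y $ l))
          = (\<Sum>y\<in>Ci i. rf_eval (\<beta>' y) (cvec q) * of_int (y $ l2))" .
    qed
    also have "\<dots> = (\<Sum>y\<in>C. rf_eval (\<beta>' y) (cvec q) * of_int (y $ l2))" by (simp add: sum_C)
    also have "\<dots> = complex_of_real (q $ l2)" using bf_prec[OF \<beta>'] qQ allC unfolding Qq_def by blast
    also have "\<dots> = cvec z $ l" by (simp add: Inr q_def cvec_def vright_def)
    finally show ?thesis .
  qed
qed

lemma cond3: assumes z: "z \<in> rel_interior HT" and m: "m \<in> TT"
  shows "rf_defined (gam m) (cvec z) \<and> (\<exists>u::real. u \<ge> 0 \<and> rf_eval (gam m) (cvec z) = complex_of_real u)"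
proof -
  define p where "p = vleft z"
  define q where "q = vright z"
  have pP: "p \<in> rel_interior Pp" using relint_left z p_def by blast
  have qQ: "q \<in> rel_interior Qq" using relint_right z q_def by blast
  have allB: "\<forall>x\<in>B. rf_defined (\<beta> x) (cvec p)" using bf_relint[OF \<beta>] pP unfolding Pp_def by blast
  have allC: "\<forall>y\<in>C. rf_defined (\<beta>' y) (cvec q)" using bf_relint[OF \<beta>'] qQ unfolding Qq_def by blast
  have lam: "lamB i (cvec p) = complex_of_real (\<psi>1 i p)" "\<psi>1 i p > 0" if "i < r" for i
    using precB[OF _ allB that] \<psi>1_pos[OF pP that] pP rel_interior_subset unfolding lamB_def by blast+
  have d: "\<forall>m\<in>TT. rf_defined (gam m) (cvec z)"
  proof -
    have "\<forall>i<r. lamB i (cvec p) \<noteq> 0" using lam by (metis less_irrefl of_real_eq_0_iff)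
    then show ?thesis unfolding all_def using allB allC by (auto simp: DB_nz DC_nz p_def q_def vleft_cvec vright_cvec)
  qed
  obtain i where i: "i < r" "vleft m \<in> Bi i" "vright m \<in> Ci i" using m by (meson TT_memE)
  obtain u1 where u1: "u1 \<ge> 0" "rf_eval (\<beta> (vleft m)) (cvec p) = complex_of_real u1"
    using bf_relint[OF \<beta>] pP i Bi_sub unfolding Pp_def by blast
  obtain u2 where u2: "u2 \<ge> 0" "rf_eval (\<beta>' (vright m)) (cvec q) = complex_of_real u2"
    using bf_relint[OF \<beta>'] qQ i Ci_sub unfolding Qq_def by blast
  have "rf_eval (gam m) (cvec z) = rf_eval (gam (vjoin (vleft m) (vright m))) (cvec z)" by simp
  also have "\<dots> = complex_of_real (u1 * u2 / \<psi>1 i p)"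
    using gam_eval[OF i, of "cvec z"] allB allC u1 u2 lam[OF i(1)]
    by (simp add: DB_nz DC_nz p_def q_def vleft_cvec vright_cvec)
  finally have "rf_eval (gam m) (cvec z) = complex_of_real (u1 * u2 / \<psi>1 i p)" .
  moreover have "u1 * u2 / \<psi>1 i p \<ge> 0" using u1 u2 lam(2)[OF i(1)] by simp
  ultimately show ?thesis using d m by blast
qed

lemma HT_ne: "rel_interior HT \<noteq> {}"
  unfolding HT_def using TT_ne by (simp add: rel_interior_eq_empty convex_convex_hull)

lemma gam_ratfun: assumes m: "m \<in> TT" shows "is_ratfun (gam m)"
proof -
  have rB: "cpoly (fst (\<beta> x))" "cpoly (snd (\<beta> x))" if "x \<in> B" for x
    using bf_ratfun[OF \<beta> that] unfolding is_ratfun_def by blast+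
  have rC: "cpoly (fst (\<beta>' y))" "cpoly (snd (\<beta>' y))" if "y \<in> C" for y
    using bf_ratfun[OF \<beta>' that] unfolding is_ratfun_def by blast+
  have DBp: "cpoly (\<lambda>X::complex^('d1+'d2). DB (vleft X))" unfolding DB_def
    by (intro cpoly_prod fin_B cpoly_vleft[of "snd (\<beta> _)", simplified] rB)
  have DCp: "cpoly (\<lambda>X::complex^('d1+'d2). DC (vright X))" unfolding DC_def
    by (intro cpoly_prod fin_C cpoly_vright[of "snd (\<beta>' _)", simplified] rC)
  have Lp: "cpoly (\<lambda>X::complex^('d1+'d2). Lam i (vleft X))" if "i < r" for i unfolding Lam_def
    using that Bi_sub
    by (intro cpoly_sum cpoly_mult cpoly_prod fin_Bi finite_Diff fin_B
        cpoly_vleft[of "snd (\<beta> _)", simplified] cpoly_vleft[of "fst (\<beta> _)", simplified] rB) auto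
  obtain i where i: "i < r" "vleft m \<in> Bi i" using m by (meson TT_memE)
  have f: "cpoly (fst (gam m))" unfolding gam_def fst_conv
    using TT_vleft[OF m] TT_vright[OF m]
    by (intro cpoly_mult cpoly_prod fin_B fin_C finite_Diff DBp
        cpoly_vleft[of "snd (\<beta> _)", simplified] cpoly_vleft[of "fst (\<beta> _)", simplified]
        cpoly_vright[of "snd (\<beta>' _)", simplified] cpoly_vright[of "fst (\<beta>' _)", simplified] rB rC) auto
  have g: "cpoly (snd (gam m))" unfolding gam_def snd_conv idx_eq[OF i]
    by (intro cpoly_mult DBp DCp Lp i)
  obtain z where z: "z \<in> rel_interior HT" using HT_ne by blast
  have "snd (gam m) (cvec z) \<noteq> 0" using cond3[OF z m] unfolding rf_defined_def by blast
  then have "snd (gam m) \<noteq> (\<lambda>_. 0)" by auto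
  then show ?thesis using f g unfolding is_ratfun_def by blast
qed

end


lemma lin_expand: fixes f :: "real^'n::finite \<Rightarrow> real" assumes "linear f"
  shows "f x = (\<Sum>i\<in>UNIV. x$i * f (axis i 1))"
proof -
  have "f x = f (\<Sum>i\<in>UNIV. (x$i) *\<^sub>R axis i 1)" using basis_expansion[of x] by (simp add: scalar_mult_eq_scaleR)
  also have "\<dots> = (\<Sum>i\<in>UNIV. x$i * f (axis i 1))" using assms by (simp add: linear_sum linear_scale)
  finally show ?thesis .
qed

context tfp begin

definition "degi i e = (\<Sum>m\<in>Ti i. e m)"
definition "lamprod Y = (\<Prod>i<r. lamv i Y)"
definition "Hf E (cf :: _ \<Rightarrow> complex) (\<delta>::nat) Y Z = (\<Sum>e\<in>E. cf e * (\<Prod>i<r. lamv i Y ^ (\<delta> - degi i e))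
     * (\<Prod>m\<in>TT. (Y (vleft m) * Z (vright m)) ^ e m))"

definition "rep E cf \<delta> (F :: (int^('d1+'d2) \<Rightarrow> complex) \<Rightarrow> complex) \<longleftrightarrow> finite E \<and> (\<forall>e\<in>E. (\<forall>v. v \<notin> TT \<longrightarrow> e v = 0) \<and> (\<Sum>v\<in>TT. e v) = \<delta>)
   \<and> F = (\<lambda>y. \<Sum>e\<in>E. cf e * (\<Prod>v\<in>TT. (y v) ^ e v))"

lemma rep_ex: "hpoly TT F \<Longrightarrow> \<exists>E cf \<delta>. rep E cf \<delta> F"
  unfolding hpoly_def rep_def by blast

lemma degi_sum: "(\<Sum>i<r. degi i e) = (\<Sum>m\<in>TT. e m)"
  unfolding degi_def by (simp add: sum_TT')

lemma degi_le: assumes "rep E cf \<delta> F" "e \<in> E" "i < r" shows "degi i e \<le> \<delta>"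
proof -
  have "degi i e \<le> (\<Sum>i<r. degi i e)" by (rule member_le_sum) (use assms(3) in auto)
  moreover have "(\<Sum>m\<in>TT. e m) = \<delta>" using assms unfolding rep_def by blast
  ultimately show ?thesis using degi_sum[of e] by simp
qed

lemma idx_Ti: "i < r \<Longrightarrow> m \<in> Ti i \<Longrightarrow> idx m = i"
  using idx_eq Ti_memE by blast

lemma K: assumes rp: "rep E cf \<delta> F" and nz: "\<forall>i<r. lamv i Y \<noteq> 0"
  shows "Hf E cf \<delta> Y Z = (\<Prod>i<r. lamv i Y ^ \<delta>) * F (Gf Y Z)"
proof -
  have F: "F = (\<lambda>y. \<Sum>e\<in>E. cf e * (\<Prod>v\<in>TT. (y v) ^ e v))" using rp rep_def by blast
  have tm: "(\<Prod>i<r. lamv i Y ^ \<delta>) * (cf e * (\<Prod>m\<in>TT. Gf Y Z m ^ e m)) =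
      cf e * (\<Prod>i<r. lamv i Y ^ (\<delta> - degi i e)) * (\<Prod>m\<in>TT. (Y (vleft m) * Z (vright m)) ^ e m)"
    if e: "e \<in> E" for e
  proof -
    have "(\<Prod>m\<in>TT. Gf Y Z m ^ e m) = (\<Prod>m\<in>TT. (Y (vleft m) * Z (vright m)) ^ e m) / (\<Prod>m\<in>TT. lamv (idx m) Y ^ e m)"
      by (simp add: Gf_def power_divide prod_dividef[symmetric] cong: prod.cong)
    also have "(\<Prod>m\<in>TT. lamv (idx m) Y ^ e m) = (\<Prod>i<r. lamv i Y ^ degi i e)"
      unfolding prod_TT degi_def power_sum by (intro prod.cong refl) (simp add: idx_Ti)
    finally have 1: "(\<Prod>m\<in>TT. Gf Y Z m ^ e m) = (\<Prod>m\<in>TT. (Y (vleft m) * Z (vright m)) ^ e m) / (\<Prod>i<r. lamv i Y ^ degi i e)" .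
    have 2: "(\<Prod>i<r. lamv i Y ^ (\<delta> - degi i e)) = (\<Prod>i<r. lamv i Y ^ \<delta>) / (\<Prod>i<r. lamv i Y ^ degi i e)"
      unfolding prod_dividef[symmetric] using nz degi_le[OF rp e] by (intro prod.cong refl) (simp add: power_diff)
    have 3: "(\<Prod>i<r. lamv i Y ^ degi i e) \<noteq> 0" using nz by (subst prod_zero_iff) auto
    show ?thesis unfolding 1 2 using 3 by (simp add: field_simps)
  qed
  show ?thesis unfolding Hf_def F by (simp add: sum_distrib_left tm)
qed

lemma gpoly_lamv: "i < r \<Longrightarrow> gpoly B (\<lambda>k. k = 1) (lamv i)"
proof -
  assume i: "i < r"
  have "gpoly B (\<lambda>k. k = 1) (\<lambda>Y. \<Sum>x\<in>Bi i. Y x)"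
    by (rule gpoly_sum[OF fin_Bi], rule gpoly_var[OF fin_B]) (use i Bi_sub in blast)
  then show ?thesis by (simp add: lamv_def[abs_def])
qed

lemma gpoly_lamprod: "gpoly B (\<lambda>k. k = r) lamprod"
proof -
  have "gpoly B (\<lambda>k. k = (\<Sum>i<r. 1)) (\<lambda>Y. \<Prod>i<r. lamv i Y)"
    by (rule hpoly_prod, simp, rule gpoly_lamv, simp)
  then show ?thesis by (simp add: lamprod_def[abs_def])
qed

lemma H_B: assumes rp: "rep E cf \<delta> F" shows "gpoly B (\<lambda>k. k = r * \<delta>) (\<lambda>Y. Hf E cf \<delta> Y Z)"
proof -
  have fE: "finite E" using rp rep_def by blast
  have "gpoly B (\<lambda>k. k = r * \<delta>) (\<lambda>Y. cf e * ((\<Prod>i<r. lamv i Y ^ (\<delta> - degi i e))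
     * (\<Prod>m\<in>TT. (Z (vright m) * Y (vleft m)) ^ e m)))" if e: "e \<in> E" for e
  proof (rule gpoly_cmult)
    have g1: "gpoly B (\<lambda>k. k = (\<Sum>i<r. (\<delta> - degi i e) * 1)) (\<lambda>Y. \<Prod>i<r. lamv i Y ^ (\<delta> - degi i e))"
      by (rule hpoly_prod, simp, rule hpoly_power, rule gpoly_lamv, simp)
    have g2: "gpoly B (\<lambda>k. k = (\<Sum>m\<in>TT. e m * 1)) (\<lambda>Y. \<Prod>m\<in>TT. (Z (vright m) * Y (vleft m)) ^ e m)"
      by (rule hpoly_prod[OF fin_TT], rule hpoly_power, rule gpoly_cmult, rule gpoly_var[OF fin_B], erule TT_vleft)
    have sd: "(\<Sum>m\<in>TT. e m) = \<delta>" using rp e rep_def by blast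
    have ar: "(\<Sum>i<r. (\<delta> - degi i e)) + \<delta> = r * \<delta>"
    proof -
      have "(\<Sum>i<r. (\<delta> - degi i e)) + (\<Sum>i<r. degi i e) = (\<Sum>i<r. \<delta>)"
        unfolding sum.distrib[symmetric] using degi_le[OF rp e] by (intro sum.cong) auto
      then show ?thesis using degi_sum[of e] sd by simp
    qed
    show "gpoly B (\<lambda>k. k = r * \<delta>) (\<lambda>Y. (\<Prod>i<r. lamv i Y ^ (\<delta> - degi i e)) * (\<Prod>m\<in>TT. (Z (vright m) * Y (vleft m)) ^ e m))"
      using gpoly_mult[OF g1 g2] by (rule gpoly_mono) (use ar sd in auto)
  qed
  then have "gpoly B (\<lambda>k. k = r * \<delta>) (\<lambda>Y. \<Sum>e\<in>E. cf e * ((\<Prod>i<r. lamv i Y ^ (\<delta> - degi i e))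
     * (\<Prod>m\<in>TT. (Z (vright m) * Y (vleft m)) ^ e m)))" by (rule gpoly_sum[OF fE])
  then show ?thesis unfolding Hf_def by (simp add: mult.commute mult.left_commute)
qed

lemma H_C: assumes rp: "rep E cf \<delta> F" shows "gpoly C (\<lambda>k. k = \<delta>) (\<lambda>Z. Hf E cf \<delta> Y Z)"
proof -
  have fE: "finite E" using rp rep_def by blast
  have "gpoly C (\<lambda>k. k = \<delta>) (\<lambda>Z. (cf e * (\<Prod>i<r. lamv i Y ^ (\<delta> - degi i e)) * (\<Prod>m\<in>TT. Y (vleft m) ^ e m))
     * (\<Prod>m\<in>TT. Z (vright m) ^ e m))" if e: "e \<in> E" for e
  proof (rule gpoly_cmult)
    have g2: "gpoly C (\<lambda>k. k = (\<Sum>m\<in>TT. e m * 1)) (\<lambda>Z. \<Prod>m\<in>TT. Z (vright m) ^ e m)"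
      by (rule hpoly_prod[OF fin_TT], rule hpoly_power, rule gpoly_var[OF fin_C], erule TT_vright)
    have sd: "(\<Sum>m\<in>TT. e m) = \<delta>" using rp e rep_def by blast
    show "gpoly C (\<lambda>k. k = \<delta>) (\<lambda>Z. \<Prod>m\<in>TT. Z (vright m) ^ e m)" using g2 sd by simp
  qed
  then have "gpoly C (\<lambda>k. k = \<delta>) (\<lambda>Z. \<Sum>e\<in>E. (cf e * (\<Prod>i<r. lamv i Y ^ (\<delta> - degi i e)) * (\<Prod>m\<in>TT. Y (vleft m) ^ e m))
     * (\<Prod>m\<in>TT. Z (vright m) ^ e m))" by (rule gpoly_sum[OF fE])
  then show ?thesis unfolding Hf_def by (simp add: power_mult_distrib prod.distrib mult.assoc)
qed

lemma shift: assumes mu: "\<forall>i<r. \<mu> i \<noteq> 0" and u: "\<forall>l. u$l \<noteq> 0"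
  shows "\<exists>u'. (\<forall>l. u'$l \<noteq> 0) \<and> (\<forall>i<r. \<forall>y\<in>Ci i. mon u' y = \<mu> i * mon u y)"
proof -
  define \<xi> :: "complex^'d" where "\<xi> = (\<chi> m. \<Sum>j<r. Ln (\<mu> j) * complex_of_real (\<phi> j (axis m 1)))"
  define \<kappa> where "\<kappa> l = (\<Sum>m\<in>UNIV. \<xi>$m * of_int (\<pi>2$m$l))" for l
  define u' where "u' = (\<chi> l. u$l * (\<chi> l. exp (\<kappa> l))$l)"
  have "\<forall>l. u'$l \<noteq> 0" using u by (simp add: u'_def)
  moreover have "mon u' y = \<mu> i * mon u y" if i: "i < r" and y: "y \<in> Ci i" for i y
  proof -
    have "(\<Sum>l\<in>UNIV. of_int (y$l) * \<kappa> l) = (\<Sum>l\<in>UNIV. \<Sum>m\<in>UNIV. \<xi>$m * of_int (\<pi>2$m$l * y$l))"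
      unfolding \<kappa>_def by (simp add: sum_distrib_left mult.commute mult.left_commute)
    also have "\<dots> = (\<Sum>m\<in>UNIV. \<Sum>l\<in>UNIV. \<xi>$m * of_int (\<pi>2$m$l * y$l))" by (rule sum.swap)
    also have "\<dots> = (\<Sum>m\<in>UNIV. \<xi>$m * of_int ((\<pi>2 *v y)$m))"
      by (simp add: matrix_vector_mult_def sum_distrib_left)
    also have "\<dots> = (\<Sum>m\<in>UNIV. \<xi>$m * of_int (a i $ m))" using \<pi>2_Ci[OF i y] by simp
    also have "\<dots> = (\<Sum>m\<in>UNIV. \<Sum>j<r. Ln (\<mu> j) * (complex_of_real (real_of_int (a i $ m) * \<phi> j (axis m 1))))"
      by (simp add: \<xi>_def sum_distrib_left sum_distrib_right mult.commute mult.left_commute)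
    also have "\<dots> = (\<Sum>j<r. \<Sum>m\<in>UNIV. Ln (\<mu> j) * (complex_of_real (real_of_int (a i $ m) * \<phi> j (axis m 1))))"
      by (rule sum.swap)
    also have "\<dots> = (\<Sum>j<r. Ln (\<mu> j) * complex_of_real (\<Sum>m\<in>UNIV. real_of_int (a i $ m) * \<phi> j (axis m 1)))"
      by (simp add: sum_distrib_left)
    also have "\<dots> = (\<Sum>j<r. Ln (\<mu> j) * complex_of_real (\<phi> j (rvec (a i))))"
    proof (rule sum.cong[OF refl])
      fix j
      have "\<phi> j (rvec (a i)) = (\<Sum>m\<in>UNIV. rvec (a i) $ m * \<phi> j (axis m 1))" by (rule lin_expand[OF \<phi>_lin])
      then show "Ln (\<mu> j) * complex_of_real (\<Sum>m\<in>UNIV. real_of_int (a i $ m) * \<phi> j (axis m 1)) =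
         Ln (\<mu> j) * complex_of_real (\<phi> j (rvec (a i)))" by (simp only: rvec_def vec_lambda_beta)
    qed
    also have "\<dots> = (\<Sum>j<r. if i = j then Ln (\<mu> j) else 0)"
      using i by (intro sum.cong refl) (simp add: \<phi>_a)
    also have "\<dots> = Ln (\<mu> i)" using i by simp
    finally have "(\<Sum>l\<in>UNIV. of_int (y$l) * \<kappa> l) = Ln (\<mu> i)" .
    then have "mon (\<chi> l. exp (\<kappa> l)) y = \<mu> i" using mu i by (simp add: mon_exp)
    then show ?thesis unfolding u'_def mon_mult by simp
  qed
  ultimately show ?thesis by blast
qed

end


lemma torus_holo: assumes "gpoly S P F" "finite S"
  shows "(\<lambda>\<tau>. F (torus S w (\<chi> l. exp (\<tau> * v$l)))) holomorphic_on UNIV"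
  by (rule gpoly_holo[OF assms]) (simp add: torus_def mon_holo holomorphic_intros)

lemma torus_pts: assumes "finite S" "S \<noteq> {}" "\<forall>x\<in>S. w x > 0" "\<forall>l. u$l \<noteq> 0"
  shows "torus S w u \<in> proj_pts S"
proof -
  obtain x where "x \<in> S" using assms(2) by blast
  then have "w x > 0" using assms(3) by blast
  then have "torus S w u x \<noteq> 0" using assms(4) \<open>x \<in> S\<close> by (simp add: torus_def mon_nz)
  then show ?thesis using \<open>x \<in> S\<close> unfolding proj_pts_def torus_def by auto
qed

lemma hpoly_gpoly: "hpoly I F \<Longrightarrow> \<exists>d. gpoly I (\<lambda>k. k = d) F"
  unfolding hpoly_def gpoly_def by blast

context tfp begin

definition "TB = {torus B w u | u. \<forall>l. u$l \<noteq> 0}"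
definition "TC = {torus C w' u | u. \<forall>l. u$l \<noteq> 0}"
definition "TTs = {torus TT ww u | u. \<forall>l. u$l \<noteq> 0}"
definition "Yb = {(\<lambda>s. if s \<in> B then rf_eval (\<beta> s) x else 0) | x. \<forall>s\<in>B. rf_defined (\<beta> s) x}"
definition "Yc = {(\<lambda>s. if s \<in> C then rf_eval (\<beta>' s) x else 0) | x. \<forall>s\<in>C. rf_defined (\<beta>' s) x}"
definition "Yg = {(\<lambda>s. if s \<in> TT then rf_eval (gam s) x else 0) | x. \<forall>s\<in>TT. rf_defined (gam s) x}"

lemma XB: "toric_var B w = proj_closure B TB" unfolding TB_def by (rule toric_var_torus)
lemma XC: "toric_var C w' = proj_closure C TC" unfolding TC_def by (rule toric_var_torus)
lemma XT: "toric_var TT ww = proj_closure TT TTs" unfolding TTs_def by (rule toric_var_torus)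

lemma B_ne: "B \<noteq> {}" using r_pos Bi_ne Bi_sub by blast
lemma C_ne: "C \<noteq> {}" using r_pos Ci_ne Ci_sub by blast
lemma ww_pos: "\<forall>m\<in>TT. ww m > 0" using w_pos w'_pos TT_vleft TT_vright by (simp add: ww_def)

lemma TB_sub: "TB \<subseteq> toric_var B w"
  unfolding XB by (rule closure_sub) (use torus_pts[OF fin_B B_ne w_pos] in \<open>auto simp: TB_def\<close>)
lemma TC_sub: "TC \<subseteq> toric_var C w'"
  unfolding XC by (rule closure_sub) (use torus_pts[OF fin_C C_ne w'_pos] in \<open>auto simp: TC_def\<close>)

lemma Yb_sub: "Yb \<subseteq> toric_var B w" unfolding Yb_def by (rule bf_Y[OF \<beta>])
lemma Yc_sub: "Yc \<subseteq> toric_var C w'" unfolding Yc_def by (rule bf_Y[OF \<beta>'])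
lemma Yb_cl: "proj_closure B Yb = toric_var B w" unfolding Yb_def by (rule bf_Ycl[OF \<beta>])
lemma Yc_cl: "proj_closure C Yc = toric_var C w'" unfolding Yc_def by (rule bf_Ycl[OF \<beta>'])

lemma yb_Yb: "DB P \<noteq> 0 \<Longrightarrow> yb P \<in> Yb" unfolding Yb_def yb_def using DB_nz by blast
lemma yc_Yc: "DC Q \<noteq> 0 \<Longrightarrow> yc Q \<in> Yc" unfolding Yc_def yc_def using DC_nz by blast
lemma Yb_yb: "Y \<in> Yb \<Longrightarrow> \<exists>P. DB P \<noteq> 0 \<and> Y = yb P" unfolding Yb_def yb_def using DB_nz by blast
lemma Yc_yc: "Z \<in> Yc \<Longrightarrow> \<exists>Q. DC Q \<noteq> 0 \<and> Z = yc Q" unfolding Yc_def yc_def using DC_nz by blast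

lemma lamprod_one: "lamprod (torus B w (\<chi> l. 1)) \<noteq> 0"
proof -
  have "lamv i (torus B w (\<chi> l. 1)) \<noteq> 0" if i: "i < r" for i
  proof -
    have "lamv i (torus B w (\<chi> l. 1)) = complex_of_real (\<Sum>x\<in>Bi i. w x)"
      unfolding lamv_def torus_def of_real_sum using Bi_sub[OF i] by (intro sum.cong refl) (auto simp: mon_def)
    moreover have "(\<Sum>x\<in>Bi i. w x) > 0"
      using Bi_ne[OF i] Bi_sub[OF i] w_pos fin_Bi by (intro sum_pos) auto
    ultimately show ?thesis by (metis of_real_eq_0_iff of_real_sum less_irrefl)
  qed
  then show ?thesis unfolding lamprod_def by simp
qed

lemma lamprod_nz: "lamprod Y \<noteq> 0 \<Longrightarrow> \<forall>i<r. lamv i Y \<noteq> 0"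
  unfolding lamprod_def by simp

lemma Gf_torus: assumes tv: "\<forall>l. tv$l \<noteq> 0"
    and rel: "\<forall>i<r. \<forall>y\<in>Ci i. mon u1 y = mon u2 y / lamv i (torus B w tv)"
  shows "Gf (torus B w tv) (torus C w' u2) = torus TT ww (vjoin tv u1)"
proof
  fix m show "Gf (torus B w tv) (torus C w' u2) m = torus TT ww (vjoin tv u1) m"
  proof (cases "m \<in> TT")
    case True
    then obtain i where i: "i < r" "vleft m \<in> Bi i" "vright m \<in> Ci i" by (meson TT_memE)
    have x: "vleft m \<in> B" and y: "vright m \<in> C" using i Bi_sub Ci_sub by blast+
    have "mon (vjoin tv u1) m = mon tv (vleft m) * mon u1 (vright m)"
      using mon_vjoin[of "vjoin tv u1" "vleft m" "vright m"] by simp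
    then show ?thesis using True x y rel i
      by (simp add: Gf_def torus_def idx_eq ww_def)
  qed (simp add: Gf_def torus_def)
qed

lemma vjoin_torus: "\<forall>l. tv$l \<noteq> 0 \<Longrightarrow> \<forall>l. u$l \<noteq> 0 \<Longrightarrow> \<forall>l. vjoin tv u $ l \<noteq> 0"
  by (simp add: vjoin_def split: sum.split)


lemma Yg_yg: "Yg = {yg X | X. \<forall>m\<in>TT. rf_defined (gam m) X}"
  unfolding Yg_def yg_def by simp

lemma Hf_torus_zero:
  assumes rp: "rep E cf \<delta> F" and Fz: "\<forall>z\<in>TTs. F z = 0"
    and tv: "\<forall>l. tv$l \<noteq> 0" and u: "\<forall>l. u$l \<noteq> 0"
  shows "Hf E cf \<delta> (torus B w tv) (torus C w' u) = 0"
proof (rule torus_identity[where f="\<lambda>t. Hf E cf \<delta> (torus B w t) (torus C w' u)" and g="\<lambda>t. lamprod (torus B w t)"])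
  show "(\<lambda>\<tau>. Hf E cf \<delta> (torus B w (\<chi> l. exp (\<tau> * v$l))) (torus C w' u)) holomorphic_on UNIV" for v
    by (rule torus_holo[OF H_B[OF rp] fin_B])
  show "(\<lambda>\<tau>. lamprod (torus B w (\<chi> l. exp (\<tau> * v$l)))) holomorphic_on UNIV" for v
    by (rule torus_holo[OF gpoly_lamprod fin_B])
  show "lamprod (torus B w (\<chi> l. 1)) \<noteq> 0" by (rule lamprod_one)
  show "\<forall>l. tv$l \<noteq> 0" by (rule tv)
  fix t :: "complex^'d1" assume t: "\<forall>l. t$l \<noteq> 0"
  show "Hf E cf \<delta> (torus B w t) (torus C w' u) * lamprod (torus B w t) = 0"
  proof (cases "lamprod (torus B w t) = 0")
    case False
    then have nz: "\<forall>i<r. lamv i (torus B w t) \<noteq> 0" by (rule lamprod_nz)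
    obtain u0 where u0: "\<forall>l. u0$l \<noteq> 0" "\<forall>i<r. \<forall>y\<in>Ci i. mon u0 y = (1 / lamv i (torus B w t)) * mon u y"
      using shift[of "\<lambda>i. 1 / lamv i (torus B w t)" u] nz u by auto
    have "Gf (torus B w t) (torus C w' u) = torus TT ww (vjoin t u0)"
      by (rule Gf_torus[OF t]) (use u0 in simp)
    moreover have "torus TT ww (vjoin t u0) \<in> TTs" unfolding TTs_def using vjoin_torus[OF t u0(1)] by blast
    ultimately have "F (Gf (torus B w t) (torus C w' u)) = 0" using Fz by simp
    then show ?thesis using K[OF rp nz] by simp
  qed simp
qed

lemma Yg_pts: assumes "\<forall>m\<in>TT. rf_defined (gam m) X" shows "yg X \<in> proj_pts TT"
proof -
  have "\<exists>m\<in>TT. yg X m \<noteq> 0"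
  proof (rule ccontr)
    assume "\<not> ?thesis"
    then have "(\<Sum>m\<in>TT. rf_eval (gam m) X) = 0" by (simp add: yg_def)
    then show False using cond1[OF assms] by simp
  qed
  then show ?thesis unfolding proj_pts_def yg_def by auto
qed

lemma Yg_sub: "Yg \<subseteq> toric_var TT ww"
proof
  fix yy assume "yy \<in> Yg"
  then obtain X where X: "\<forall>m\<in>TT. rf_defined (gam m) X" "yy = yg X" unfolding Yg_yg by blast
  have d: "DB (vleft X) \<noteq> 0" "DC (vright X) \<noteq> 0" "\<forall>i<r. lamB i (vleft X) \<noteq> 0"
    using X(1) all_def by blast+
  have nz: "\<forall>i<r. lamv i (yb (vleft X)) \<noteq> 0" using d(3) lamv_yb by simp
  show "yy \<in> toric_var TT ww"
    unfolding XT proj_closure_def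
  proof (intro CollectI conjI allI impI)
    show "yy \<in> proj_pts TT" using Yg_pts[OF X(1)] X(2) by simp
    fix F assume F: "hpoly TT F \<and> (\<forall>z\<in>TTs. F z = 0)"
    then obtain E cf \<delta> where rp: "rep E cf \<delta> F" using rep_ex by blast
    have A: "Hf E cf \<delta> y (torus C w' u) = 0" if "y \<in> toric_var B w" "\<forall>l. u$l \<noteq> 0" for y u
    proof (rule closure_vanish[OF that(1)[unfolded XB]])
      show "hpoly B (\<lambda>Y. Hf E cf \<delta> Y (torus C w' u))" by (rule gpoly_hpoly[OF H_B[OF rp]])
      fix z assume "z \<in> TB"
      then obtain tv where "\<forall>l. tv$l \<noteq> 0" "z = torus B w tv" unfolding TB_def by blast
      then show "Hf E cf \<delta> z (torus C w' u) = 0" using Hf_torus_zero[OF rp _ _ that(2)] F by blast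
    qed
    have B: "Hf E cf \<delta> y z = 0" if "y \<in> toric_var B w" "z \<in> toric_var C w'" for y z
    proof (rule closure_vanish[OF that(2)[unfolded XC]])
      show "hpoly C (\<lambda>Z. Hf E cf \<delta> y Z)" by (rule gpoly_hpoly[OF H_C[OF rp]])
      fix z assume "z \<in> TC"
      then obtain u where "\<forall>l. u$l \<noteq> 0" "z = torus C w' u" unfolding TC_def by blast
      then show "Hf E cf \<delta> y z = 0" using A[OF that(1)] by blast
    qed
    have "Hf E cf \<delta> (yb (vleft X)) (yc (vright X)) = 0"
      using B yb_Yb[OF d(1)] yc_Yc[OF d(2)] Yb_sub Yc_sub by blast
    then have "(\<Prod>i<r. lamv i (yb (vleft X)) ^ \<delta>) * F (Gf (yb (vleft X)) (yc (vright X))) = 0"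
      using K[OF rp nz] by simp
    moreover have "(\<Prod>i<r. lamv i (yb (vleft X)) ^ \<delta>) \<noteq> 0" using nz by simp
    ultimately show "F yy = 0" using X(2) yg_eq[OF d(1,2)] by simp
  qed
qed


lemma TTs_pts: "TTs \<subseteq> proj_pts TT"
  unfolding TTs_def using torus_pts[OF fin_TT TT_ne ww_pos] by blast

lemma TTs_sub: "TTs \<subseteq> proj_closure TT Yg"
proof
  fix tau assume "tau \<in> TTs"
  then obtain t2 where t2: "\<forall>l. t2$l \<noteq> 0" "tau = torus TT ww t2" unfolding TTs_def by blast
  show "tau \<in> proj_closure TT Yg"
    unfolding proj_closure_def
  proof (intro CollectI conjI allI impI)
    show "tau \<in> proj_pts TT" using TTs_pts \<open>tau \<in> TTs\<close> by blast
    fix F assume F: "hpoly TT F \<and> (\<forall>z\<in>Yg. F z = 0)"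
    then obtain E cf \<delta> where rp: "rep E cf \<delta> F" using rep_ex by blast
    have A: "Hf E cf \<delta> Y Z = 0" if hA: "Y \<in> Yb" "Z \<in> Yc" "\<forall>i<r. lamv i Y \<noteq> 0" for Y Z
    proof -
      obtain P where P: "DB P \<noteq> 0" "Y = yb P" using Yb_yb[OF hA(1)] by blast
      obtain Q where Q: "DC Q \<noteq> 0" "Z = yc Q" using Yc_yc[OF hA(2)] by blast
      define X where "X = vjoin P Q"
      have dX: "DB (vleft X) \<noteq> 0" "DC (vright X) \<noteq> 0" using P Q by (simp_all add: X_def)
      have "\<forall>i<r. lamB i (vleft X) \<noteq> 0" using hA(3) P(2) lamv_yb by (simp add: X_def)
      then have "\<forall>m\<in>TT. rf_defined (gam m) X" using dX all_def by blast
      then have "yg X \<in> Yg" unfolding Yg_yg by blast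
      then have "F (yg X) = 0" using F by blast
      moreover have "yg X = Gf Y Z" using yg_eq[OF dX] P Q by (simp add: X_def)
      ultimately show ?thesis using K[OF rp hA(3)] by simp
    qed
    have B: "Hf E cf \<delta> (torus B w tv) Z = 0" if "\<forall>l. tv$l \<noteq> 0" "Z \<in> Yc" for tv Z
    proof (rule torus_identity[where f="\<lambda>t. Hf E cf \<delta> (torus B w t) Z" and g="\<lambda>t. lamprod (torus B w t)"])
      show "(\<lambda>\<tau>. Hf E cf \<delta> (torus B w (\<chi> l. exp (\<tau> * v$l))) Z) holomorphic_on UNIV" for v
        by (rule torus_holo[OF H_B[OF rp] fin_B])
      show "(\<lambda>\<tau>. lamprod (torus B w (\<chi> l. exp (\<tau> * v$l)))) holomorphic_on UNIV" for v
        by (rule torus_holo[OF gpoly_lamprod fin_B])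
      show "lamprod (torus B w (\<chi> l. 1)) \<noteq> 0" by (rule lamprod_one)
      show "\<forall>l. tv$l \<noteq> 0" by (rule that(1))
      fix t :: "complex^'d1" assume t: "\<forall>l. t$l \<noteq> 0"
      have tB: "torus B w t \<in> proj_closure B Yb" using TB_sub Yb_cl t unfolding TB_def by blast
      show "Hf E cf \<delta> (torus B w t) Z * lamprod (torus B w t) = 0"
      proof (rule closure_vanish[OF tB, where F="\<lambda>Y. Hf E cf \<delta> Y Z * lamprod Y"])
        have "gpoly B (\<lambda>k. k = r * \<delta> + r) (\<lambda>Y. Hf E cf \<delta> Y Z * lamprod Y)"
          using gpoly_mult[OF H_B[OF rp] gpoly_lamprod] by (rule gpoly_mono) auto
        then show "hpoly B (\<lambda>Y. Hf E cf \<delta> Y Z * lamprod Y)" by (rule gpoly_hpoly)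
        fix Y assume Y: "Y \<in> Yb"
        show "Hf E cf \<delta> Y Z * lamprod Y = 0"
        proof (cases "lamprod Y = 0")
          case False
          then show ?thesis using A[OF Y that(2) lamprod_nz[OF False]] by simp
        qed simp
      qed
    qed
    have C: "Hf E cf \<delta> (torus B w tv) (torus C w' u) = 0" if "\<forall>l. tv$l \<noteq> 0" "\<forall>l. u$l \<noteq> 0" for tv u
    proof -
      have uC: "torus C w' u \<in> proj_closure C Yc" using TC_sub Yc_cl that(2) unfolding TC_def by blast
      show ?thesis
        by (rule closure_vanish[OF uC gpoly_hpoly[OF H_C[OF rp]]]) (rule B[OF that(1)])
    qed
    have "F (torus TT ww t2) = 0"
    proof (rule torus_identity[where f="\<lambda>t. F (torus TT ww t)" and g="\<lambda>t. lamprod (torus B w (vleft t))"])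
      obtain d where gF: "gpoly TT (\<lambda>k. k = d) F" using hpoly_gpoly F by blast
      show "(\<lambda>\<tau>. F (torus TT ww (\<chi> l. exp (\<tau> * v$l)))) holomorphic_on UNIV" for v
        by (rule torus_holo[OF gF fin_TT])
      show "(\<lambda>\<tau>. lamprod (torus B w (vleft (\<chi> l. exp (\<tau> * v$l))))) holomorphic_on UNIV" for v :: "complex^('d1+'d2)"
      proof -
        have "(\<lambda>\<tau>. lamprod (torus B w (\<chi> l. exp (\<tau> * vleft v$l)))) holomorphic_on UNIV"
          by (rule torus_holo[OF gpoly_lamprod fin_B])
        moreover have "vleft (\<chi> l. exp (\<tau> * v$l)) = (\<chi> l. exp (\<tau> * vleft v$l))" for \<tau>
          by (simp add: vleft_def)
        ultimately show ?thesis by simp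
      qed
      show "lamprod (torus B w (vleft ((\<chi> l. (1::complex)) :: complex^('d1+'d2)))) \<noteq> 0"
      proof -
        have "vleft ((\<chi> l. (1::complex)) :: complex^('d1+'d2)) = (\<chi> l. (1::complex))" by (simp add: vleft_def)
        then show ?thesis using lamprod_one by simp
      qed
      show "\<forall>l. t2$l \<noteq> 0" by (rule t2(1))
      fix t :: "complex^('d1+'d2)" assume t: "\<forall>l. t$l \<noteq> 0"
      show "F (torus TT ww t) * lamprod (torus B w (vleft t)) = 0"
      proof (cases "lamprod (torus B w (vleft t)) = 0")
        case False
        then have nz: "\<forall>i<r. lamv i (torus B w (vleft t)) \<noteq> 0" by (rule lamprod_nz)
        have tl: "\<forall>l. vleft t $ l \<noteq> 0" and tr: "\<forall>l. vright t $ l \<noteq> 0" using t by (simp_all add: vleft_def vright_def)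
        obtain u' where u': "\<forall>l. u'$l \<noteq> 0" "\<forall>i<r. \<forall>y\<in>Ci i. mon u' y = lamv i (torus B w (vleft t)) * mon (vright t) y"
          using shift[of "\<lambda>i. lamv i (torus B w (vleft t))" "vright t"] nz tr by auto
        have "Gf (torus B w (vleft t)) (torus C w' u') = torus TT ww (vjoin (vleft t) (vright t))"
          by (rule Gf_torus[OF tl]) (use u' nz in simp)
        then have G: "Gf (torus B w (vleft t)) (torus C w' u') = torus TT ww t" by simp
        have "Hf E cf \<delta> (torus B w (vleft t)) (torus C w' u') = 0" by (rule C[OF tl u'(1)])
        then have "(\<Prod>i<r. lamv i (torus B w (vleft t)) ^ \<delta>) * F (torus TT ww t) = 0"
          using K[OF rp nz] G by simp
        moreover have "(\<Prod>i<r. lamv i (torus B w (vleft t)) ^ \<delta>) \<noteq> 0" using nz by simp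
        ultimately show ?thesis by simp
      qed simp
    qed
    then show "F tau = 0" using t2 by simp
  qed
qed

lemma Yg_cl: "proj_closure TT Yg = toric_var TT ww"
proof
  show "proj_closure TT Yg \<subseteq> toric_var TT ww"
    unfolding XT by (rule closure_mono) (use Yg_sub XT in simp)
  show "toric_var TT ww \<subseteq> proj_closure TT Yg"
    unfolding XT by (rule closure_mono[OF TTs_sub])
qed

end


context tfp begin

lemma bf_gam: "blending_functions TT ww gam"
  unfolding blending_functions_def Let_def
proof (intro conjI ballI allI impI)
  show "is_ratfun (gam m)" if "m \<in> TT" for m using gam_ratfun[OF that] .
  show "(\<Sum>m\<in>TT. rf_eval (gam m) x) = 1" if "\<forall>m\<in>TT. rf_defined (gam m) x" for x using cond1[OF that] .
  show "{(\<lambda>s. if s \<in> TT then rf_eval (gam s) x else 0) | x. \<forall>s\<in>TT. rf_defined (gam s) x} \<subseteq> toric_var TT ww"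
    using Yg_sub unfolding Yg_def .
  show "proj_closure TT {(\<lambda>s. if s \<in> TT then rf_eval (gam s) x else 0) | x. \<forall>s\<in>TT. rf_defined (gam s) x} = toric_var TT ww"
    using Yg_cl unfolding Yg_def .
  show "rf_defined (gam m) (cvec p)" if "p \<in> rel_interior (convex hull (rvec ` TT))" "m \<in> TT" for p m
    using cond3[of p m] that unfolding HT_def by blast
  show "\<exists>u. 0 \<le> u \<and> rf_eval (gam m) (cvec p) = complex_of_real u"
    if "p \<in> rel_interior (convex hull (rvec ` TT))" "m \<in> TT" for p m
    using cond3[of p m] that unfolding HT_def by blast
  show "(\<Sum>m\<in>TT. rf_eval (gam m) (cvec p) * of_int (m $ l)) = cvec p $ l"
    if "p \<in> convex hull (rvec ` TT)" "\<forall>m\<in>TT. rf_defined (gam m) (cvec p)" for p l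
    using cond4[of p l] that unfolding HT_def by blast
qed

lemma Bi_alt: "{b i j' | j'. j' < s i} = Bi i" unfolding Bi_def by blast
lemma Ci_alt: "{c i k' | k'. k' < t i} = Ci i" unfolding Ci_def by blast

lemma E1: assumes "i < r" "j < s i" "k < t i" "rf_defined (gam (vjoin (b i j) (c i k))) x"
  shows "rf_eval (gam (vjoin (b i j) (c i k))) x
      = rf_eval (\<beta> (b i j)) (vleft x) * rf_eval (\<beta>' (c i k)) (vright x)
        / (\<Sum>b'\<in>{b i j' | j'. j' < s i}. rf_eval (\<beta> b') (vleft x))"
proof -
  have d: "DB (vleft x) \<noteq> 0" "DC (vright x) \<noteq> 0" using assms(4) gam_def_iff by blast+
  have bi: "b i j \<in> Bi i" and ci: "c i k \<in> Ci i" using assms(2,3) unfolding Bi_def Ci_def by blast+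
  show ?thesis unfolding Bi_alt using gam_eval[OF assms(1) bi ci d] by (simp add: lamB_def)
qed

lemma E2: assumes i: "i < r" and z: "z \<in> convex hull (rvec ` TT)"
    and dB: "\<forall>b'\<in>{b i j' | j'. j' < s i}. rf_defined (\<beta> b') (vleft (cvec z))"
    and dC: "\<forall>c'\<in>{c i k' | k'. k' < t i}. rf_defined (\<beta>' c') (vright (cvec z))"
  shows "(\<Sum>b'\<in>{b i j' | j'. j' < s i}. rf_eval (\<beta> b') (vleft (cvec z)))
       = (\<Sum>c'\<in>{c i k' | k'. k' < t i}. rf_eval (\<beta>' c') (vright (cvec z)))"
proof -
  have zH: "z \<in> HT" using z unfolding HT_def .
  have p: "vleft z \<in> Pp" using vleft_HT zH by blast
  have q: "vright z \<in> Qq" using vright_HT zH by blast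
  have "(\<Sum>b'\<in>Bi i. rf_eval (\<beta> b') (cvec (vleft z))) = complex_of_real (\<psi>1 i (vleft z))"
    by (rule precB_part[OF p i]) (use dB in \<open>simp add: Bi_alt vleft_cvec\<close>)
  also have "\<dots> = complex_of_real (\<psi>2 i (vright z))" using lmap_HT[OF zH] by (simp add: \<psi>1_def \<psi>2_def)
  also have "\<dots> = (\<Sum>c'\<in>Ci i. rf_eval (\<beta>' c') (cvec (vright z)))"
    by (rule precC_part[OF q i, symmetric]) (use dC in \<open>simp add: Ci_alt vright_cvec\<close>)
  finally show ?thesis by (simp add: Bi_alt Ci_alt vleft_cvec vright_cvec)
qed

end


theorem theorem3p1:
  fixes r :: nat and s t :: "nat \<Rightarrow> nat"
    and a :: "nat \<Rightarrow> int^'d"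
    and b :: "nat \<Rightarrow> nat \<Rightarrow> int^'d1"
    and c :: "nat \<Rightarrow> nat \<Rightarrow> int^'d2"
    and \<pi>1 :: "int^'d1^'d" and \<pi>2 :: "int^'d2^'d"
    and w :: "int^'d1 \<Rightarrow> real" and w' :: "int^'d2 \<Rightarrow> real"
    and \<beta> :: "int^'d1 \<Rightarrow> 'd1 ratfun" and \<beta>' :: "int^'d2 \<Rightarrow> 'd2 ratfun"
    and B :: "(int^'d1) set" and C :: "(int^'d2) set"
  assumes s_pos: "\<forall>i<r. s i \<ge> 1" and t_pos: "\<forall>i<r. t i \<ge> 1"
    and A_inj: "inj_on a {..<r}"
    and A_indep: "independent ((\<lambda>i. rvec (a i)) ` {..<r})"
    and A_hom: "\<exists>\<omega>::real^'d. (\<forall>l. \<omega> $ l \<in> \<rat>) \<and> (\<forall>i<r. \<omega> \<bullet> rvec (a i) = 1)"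
    and B_def: "B = {b i j | i j. i < r \<and> j < s i}"
    and C_def: "C = {c i k | i k. i < r \<and> k < t i}"
    and \<pi>1: "\<forall>i<r. \<forall>j<s i. \<pi>1 *v b i j = a i"
    and \<pi>2: "\<forall>i<r. \<forall>k<t i. \<pi>2 *v c i k = a i"
    and w_pos: "\<forall>x\<in>B. w x > 0" and w'_pos: "\<forall>y\<in>C. w' y > 0"
    and \<beta>: "blending_functions B w \<beta>"
    and \<beta>': "blending_functions C w' \<beta>'"
  shows "rational_linear_precision (toric_fiber_product r s t b c)
           (\<lambda>m. w (vleft m) * w' (vright m))
       \<and> (\<exists>\<gamma>. blending_functions (toric_fiber_product r s t b c)
                 (\<lambda>m. w (vleft m) * w' (vright m)) \<gamma>
            \<and> (\<forall>i<r. \<forall>j<s i. \<forall>k<t i. \<forall>x.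
                 rf_defined (\<gamma> (vjoin (b i j) (c i k))) x
                 \<and> (\<forall>b'\<in>{b i j' | j'. j' < s i}. rf_defined (\<beta> b') (vleft x))
                 \<and> rf_defined (\<beta>' (c i k)) (vright x)
                 \<and> (\<Sum>b'\<in>{b i j' | j'. j' < s i}. rf_eval (\<beta> b') (vleft x)) \<noteq> 0
                 \<longrightarrow> rf_eval (\<gamma> (vjoin (b i j) (c i k))) x
                     = rf_eval (\<beta> (b i j)) (vleft x) * rf_eval (\<beta>' (c i k)) (vright x)
                       / (\<Sum>b'\<in>{b i j' | j'. j' < s i}. rf_eval (\<beta> b') (vleft x)))
            \<and> (\<forall>i<r. \<forall>j<s i. \<forall>k<t i.
                 \<forall>z\<in>convex hull (rvec ` toric_fiber_product r s t b c).
                 (\<forall>b'\<in>{b i j' | j'. j' < s i}. rf_defined (\<beta> b') (vleft (cvec z)))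
                 \<and> (\<forall>c'\<in>{c i k' | k'. k' < t i}. rf_defined (\<beta>' c') (vright (cvec z)))
                 \<and> (\<Sum>b'\<in>{b i j' | j'. j' < s i}. rf_eval (\<beta> b') (vleft (cvec z))) \<noteq> 0
                 \<and> (\<Sum>c'\<in>{c i k' | k'. k' < t i}. rf_eval (\<beta>' c') (vright (cvec z))) \<noteq> 0
                 \<longrightarrow> rf_eval (\<beta> (b i j)) (vleft (cvec z)) * rf_eval (\<beta>' (c i k)) (vright (cvec z))
                       / (\<Sum>b'\<in>{b i j' | j'. j' < s i}. rf_eval (\<beta> b') (vleft (cvec z)))
                     = rf_eval (\<beta> (b i j)) (vleft (cvec z)) * rf_eval (\<beta>' (c i k)) (vright (cvec z))
                       / (\<Sum>c'\<in>{c i k' | k'. k' < t i}. rf_eval (\<beta>' c') (vright (cvec z)))))"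
proof -
  interpret tfp r s t a b c \<pi>1 \<pi>2 w w' \<beta> \<beta>' B C
    by (rule tfp.intro[OF s_pos t_pos A_inj A_indep B_def C_def \<pi>1 \<pi>2 w_pos w'_pos \<beta> \<beta>'])
  have ww': "ww = (\<lambda>m. w (vleft m) * w' (vright m))" by (simp add: ww_def[abs_def])
  have bf: "blending_functions (toric_fiber_product r s t b c) (\<lambda>m. w (vleft m) * w' (vright m)) gam"
    using bf_gam unfolding TT_def ww' .
  show ?thesis
  proof (intro conjI exI[of _ gam])
    show "rational_linear_precision (toric_fiber_product r s t b c) (\<lambda>m. w (vleft m) * w' (vright m))"
      unfolding rational_linear_precision_def using bf by blast
    show "blending_functions (toric_fiber_product r s t b c) (\<lambda>m. w (vleft m) * w' (vright m)) gam" by (rule bf)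
    show "\<forall>i<r. \<forall>j<s i. \<forall>k<t i. \<forall>x.
                 rf_defined (gam (vjoin (b i j) (c i k))) x
                 \<and> (\<forall>b'\<in>{b i j' | j'. j' < s i}. rf_defined (\<beta> b') (vleft x))
                 \<and> rf_defined (\<beta>' (c i k)) (vright x)
                 \<and> (\<Sum>b'\<in>{b i j' | j'. j' < s i}. rf_eval (\<beta> b') (vleft x)) \<noteq> 0
                 \<longrightarrow> rf_eval (gam (vjoin (b i j) (c i k))) x
                     = rf_eval (\<beta> (b i j)) (vleft x) * rf_eval (\<beta>' (c i k)) (vright x)
                       / (\<Sum>b'\<in>{b i j' | j'. j' < s i}. rf_eval (\<beta> b') (vleft x))"
      using E1 by blast
    show "\<forall>i<r. \<forall>j<s i. \<forall>k<t i.
                 \<forall>z\<in>convex hull (rvec ` toric_fiber_product r s t b c).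
                 (\<forall>b'\<in>{b i j' | j'. j' < s i}. rf_defined (\<beta> b') (vleft (cvec z)))
                 \<and> (\<forall>c'\<in>{c i k' | k'. k' < t i}. rf_defined (\<beta>' c') (vright (cvec z)))
                 \<and> (\<Sum>b'\<in>{b i j' | j'. j' < s i}. rf_eval (\<beta> b') (vleft (cvec z))) \<noteq> 0
                 \<and> (\<Sum>c'\<in>{c i k' | k'. k' < t i}. rf_eval (\<beta>' c') (vright (cvec z))) \<noteq> 0
                 \<longrightarrow> rf_eval (\<beta> (b i j)) (vleft (cvec z)) * rf_eval (\<beta>' (c i k)) (vright (cvec z))
                       / (\<Sum>b'\<in>{b i j' | j'. j' < s i}. rf_eval (\<beta> b') (vleft (cvec z)))
                     = rf_eval (\<beta> (b i j)) (vleft (cvec z)) * rf_eval (\<beta>' (c i k)) (vright (cvec z))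
                       / (\<Sum>c'\<in>{c i k' | k'. k' < t i}. rf_eval (\<beta>' c') (vright (cvec z)))"
    proof (intro allI impI ballI)
      fix i j k z
      assume i: "i < r" and z: "z \<in> convex hull (rvec ` toric_fiber_product r s t b c)"
        and h: "(\<forall>b'\<in>{b i j' | j'. j' < s i}. rf_defined (\<beta> b') (vleft (cvec z)))
                 \<and> (\<forall>c'\<in>{c i k' | k'. k' < t i}. rf_defined (\<beta>' c') (vright (cvec z)))
                 \<and> (\<Sum>b'\<in>{b i j' | j'. j' < s i}. rf_eval (\<beta> b') (vleft (cvec z))) \<noteq> 0
                 \<and> (\<Sum>c'\<in>{c i k' | k'. k' < t i}. rf_eval (\<beta>' c') (vright (cvec z))) \<noteq> 0"
      have "(\<Sum>b'\<in>{b i j' | j'. j' < s i}. rf_eval (\<beta> b') (vleft (cvec z)))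
       = (\<Sum>c'\<in>{c i k' | k'. k' < t i}. rf_eval (\<beta>' c') (vright (cvec z)))"
        by (rule E2[OF i]) (use z h TT_def in auto)
      then show "rf_eval (\<beta> (b i j)) (vleft (cvec z)) * rf_eval (\<beta>' (c i k)) (vright (cvec z))
                       / (\<Sum>b'\<in>{b i j' | j'. j' < s i}. rf_eval (\<beta> b') (vleft (cvec z)))
                     = rf_eval (\<beta> (b i j)) (vleft (cvec z)) * rf_eval (\<beta>' (c i k)) (vright (cvec z))
                       / (\<Sum>c'\<in>{c i k' | k'. k' < t i}. rf_eval (\<beta>' c') (vright (cvec z)))" by simp
    qed
  qed
qed


end
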